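(* Let $X$ be a connected, finite, simple $3$-valent graph equipped with an orientation at each vertex, let $k\geq1$, let $N=|V(\mathrm{GC}_{k,0}(X))|$ and let $\lambda_1(\mathrm{GC}_{k,0}(X))\leq\cdots\leq\lambda_N(\mathrm{GC}_{k,0}(X))$ be its Laplacian eigenvalues. Let $\nu_1(k)\leq\cdots\leq\nu_{k^2}(k)$ be the eigenvalues of the adjacency matrix, and $0=\lambda_1(k)\leq\lambda_2(k)\leq\cdots\leq\lambda_{k^2}(k)$ the eigenvalues of the Laplacian, of the $3$-valent $(k,0)$-cluster $\triangle(k)$. Then for $j=1,\dots,k^2$, $$\lambda_j(\mathrm{GC}_{k,0}(X))\leq 3-\nu_{k^2-j+1}(k),\qquad \lambda_{N-j+1}(\mathrm{GC}_{k,0}(X))\geq 3-\nu_j(k).$$ Moreover, $$\lambda_i(\mathrm{GC}_{k,0}(X))\leq\lambda_t(k)+\delta_{k^2-t+i}(k)\quad\text{for }1\leq i\leq t\leq k^2,$$ $$\lambda_{N-j+1}(\mathrm{GC}_{k,0}(X))\geq\lambda_{k^2-s+1}(k)+\delta_{1+s-j}(k)\quad\text{for }1\leq j\leq s\leq k^2,$$ where $\delta_j(k)=0$ for $j=1,\dots,k^2-3k+3$, $\delta_j(k)=1$ for $j=k^2-3k+4,\dots,k^2-3$, and $\delta_j(k)=2$ for $j=k^2-2,k^2-1,k^2$.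
   Context: The Laplacian of a graph $Y$ acts on $f\in\mathbb{C}^{V(Y)}$ by $(\Delta_Y f)(p)=\deg_Y(p)f(p)-\sum_{q\sim p}f(q)$; eigenvalues are listed with multiplicity in nondecreasing order. An orientation at each vertex is a cyclic ordering of the three edges at each vertex. The $3$-valent $(k,0)$-cluster $\triangle(k)$: with $\omega=e^{\pi i/3}$, the triangle with vertices $0,k,k\omega$ is subdivided by the triangular lattice $\mathbb{Z}[\omega]$ into $k^2$ unit triangles; $\triangle(k)$ is the graph whose vertices are the barycenters of these $k^2$ unit triangles, two being adjacent when the triangles share an edge (its Laplacian uses its own vertex degrees). Goldberg–Coxeter construction $\mathrm{GC}_{k,0}(X)$: for each $p\in V(X)$ take a copy $\triangle(p)$ of $\triangle(k)$ placed on the triangle $T$ with vertices $0,k,k\omega$, whose three sides are matched with the three edges at $p$ so that the cyclic order at $p$ agrees with the counterclockwise order of the sides. For each edge $e=pq$, place $\triangle(p)$ on $T$ with $e$ corresponding to the side from $k$ to $k\omega$ and $\triangle(q)$ (preserving orientation) on the triangle with vertices $k,(1+\omega)k,\omega k$ with $e$ corresponding to the side from $\omega k$ to $k$, and join (identify) the overlapping lattice edges between the two pieces; the result is the $3$-valent graph $\mathrm{GC}_{k,0}(X)$, containing each $\triangle(p)$ as an induced subgraph. *)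

theory Defs
  imports "Jordan_Normal_Form.Char_Poly" "HOL-Library.Multiset"
begin

text \<open>A graph is given by a vertex set V and an adjacency relation E.
  Matrices are built with respect to an arbitrary enumeration of V; the spectrum
  does not depend on that choice.\<close>

definition vlist :: "'v set \<Rightarrow> 'v list" where
  "vlist V = (SOME xs. distinct xs \<and> set xs = V)"

definition graph_degree :: "'v set \<Rightarrow> ('v \<Rightarrow> 'v \<Rightarrow> bool) \<Rightarrow> 'v \<Rightarrow> nat" where
  "graph_degree V E p = card {q \<in> V. E p q}"

definition adjacency_mat :: "'v set \<Rightarrow> ('v \<Rightarrow> 'v \<Rightarrow> bool) \<Rightarrow> real mat" where
  "adjacency_mat V E = (let vs = vlist V; n = length vs in
     mat n n (\<lambda>(i, j). if E (vs ! i) (vs ! j) then 1 else 0))"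

definition laplacian_mat :: "'v set \<Rightarrow> ('v \<Rightarrow> 'v \<Rightarrow> bool) \<Rightarrow> real mat" where
  "laplacian_mat V E = (let vs = vlist V; n = length vs in
     mat n n (\<lambda>(i, j). (if i = j then real (graph_degree V E (vs ! i)) else 0)
                       - (if E (vs ! i) (vs ! j) then 1 else 0)))"

text \<open>Eigenvalues listed with multiplicity (roots of the characteristic polynomial)
  in nondecreasing order; eig A j is the j-th one (1-based).\<close>
definition eig :: "real mat \<Rightarrow> nat \<Rightarrow> real" where
  "eig A j = sorted_list_of_multiset (proots (char_poly A)) ! (j - 1)"

definition simple_graph :: "'v set \<Rightarrow> ('v \<Rightarrow> 'v \<Rightarrow> bool) \<Rightarrow> bool" where
  "simple_graph V E \<longleftrightarrow> finite V \<and> (\<forall>p q. E p q \<longrightarrow> p \<in> V \<and> q \<in> V)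
     \<and> (\<forall>p q. E p q \<longrightarrow> E q p) \<and> (\<forall>p. \<not> E p p)"

definition connected_graph :: "'v set \<Rightarrow> ('v \<Rightarrow> 'v \<Rightarrow> bool) \<Rightarrow> bool" where
  "connected_graph V E \<longleftrightarrow> V \<noteq> {} \<and> (\<forall>p\<in>V. \<forall>q\<in>V. E\<^sup>*\<^sup>* p q)"

definition three_valent :: "'v set \<Rightarrow> ('v \<Rightarrow> 'v \<Rightarrow> bool) \<Rightarrow> bool" where
  "three_valent V E \<longleftrightarrow> (\<forall>p\<in>V. graph_degree V E p = 3)"

text \<open>An orientation at each vertex of a 3-valent simple graph: the cyclic ordering
  nb p 0 -> nb p 1 -> nb p 2 -> nb p 0 of the three edges (equivalently the three
  neighbours, the graph being simple) at p.\<close>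
definition orientation :: "'v set \<Rightarrow> ('v \<Rightarrow> 'v \<Rightarrow> bool) \<Rightarrow> ('v \<Rightarrow> nat \<Rightarrow> 'v) \<Rightarrow> bool" where
  "orientation V E nb \<longleftrightarrow>
     (\<forall>p\<in>V. bij_betw (nb p) {0, 1, 2} {q \<in> V. E p q})"

text \<open>Unit triangles of the triangle with vertices 0, k, k omega, in coordinates
  a + b omega: Up a b has vertices (a,b),(a+1,b),(a,b+1) (a+b<k);
  Dn a b has vertices (a+1,b),(a,b+1),(a+1,b+1) (a+b+1<k).\<close>
datatype tri = Up nat nat | Dn nat nat

definition tri_verts :: "nat \<Rightarrow> tri set" where
  "tri_verts k = {Up a b | a b. a + b < k} \<union> {Dn a b | a b. a + b + 1 < k}"

fun tri_share :: "tri \<Rightarrow> tri \<Rightarrow> bool" where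
  "tri_share (Up a b) (Dn c d) = ((c = a \<and> d = b) \<or> (c + 1 = a \<and> d = b) \<or> (c = a \<and> d + 1 = b))"
| "tri_share (Dn c d) (Up a b) = ((c = a \<and> d = b) \<or> (c + 1 = a \<and> d = b) \<or> (c = a \<and> d + 1 = b))"
| "tri_share _ _ = False"

definition cluster_adj :: "nat \<Rightarrow> tri \<Rightarrow> tri \<Rightarrow> bool" where
  "cluster_adj k x y \<longleftrightarrow> x \<in> tri_verts k \<and> y \<in> tri_verts k \<and> tri_share x y"

text \<open>Side i of the triangle (i=0: from 0 to k, i=1: from k to k omega,
  i=2: from k omega to 0; counterclockwise order) carries k unit (up) triangles;
  side_tri k i t is the t-th one (t<k) counted along the counterclockwise direction
  of the side.  Placing dart i of p on side i (cyclic order = counterclockwise order),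
  the gluing of the edge pq described in the paper (the copy for q is rotated by pi
  about the midpoint of the common side) identifies the lattice edge of the t-th
  triangle on the side of p with that of the (k-1-t)-th triangle on the side of q.\<close>
definition side_tri :: "nat \<Rightarrow> nat \<Rightarrow> nat \<Rightarrow> tri" where
  "side_tri k i t = (if i = 0 then Up t 0 else if i = 1 then Up (k - 1 - t) t else Up 0 (k - 1 - t))"

definition gc_verts :: "'v set \<Rightarrow> nat \<Rightarrow> ('v \<times> tri) set" where
  "gc_verts V k = V \<times> tri_verts k"

definition gc_adj :: "'v set \<Rightarrow> ('v \<Rightarrow> 'v \<Rightarrow> bool) \<Rightarrow> ('v \<Rightarrow> nat \<Rightarrow> 'v) \<Rightarrow> nat
    \<Rightarrow> 'v \<times> tri \<Rightarrow> 'v \<times> tri \<Rightarrow> bool" where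
  "gc_adj V E nb k u w \<longleftrightarrow> u \<in> gc_verts V k \<and> w \<in> gc_verts V k \<and>
     ((fst u = fst w \<and> cluster_adj k (snd u) (snd w)) \<or>
      (\<exists>i<3. \<exists>j<3. \<exists>t<k. E (fst u) (fst w) \<and> nb (fst u) i = fst w \<and> nb (fst w) j = fst u
          \<and> snd u = side_tri k i t \<and> snd w = side_tri k j (k - 1 - t)))"

definition delta :: "nat \<Rightarrow> nat \<Rightarrow> real" where
  "delta k j = (if int j \<le> int (k^2) - 3 * int k + 3 then 0
                else if int j \<le> int (k^2) - 3 then 1 else 2)"

end

theory Submission
  imports Defs "Jordan_Normal_Form.Schur_Decomposition"
begin

definition symm :: "real mat \<Rightarrow> nat \<Rightarrow> bool" where
  "symm A n \<longleftrightarrow> A \<in> carrier_mat n n \<and> (\<forall>i<n. \<forall>j<n. A $$ (i,j) = A $$ (j,i))"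

lemma symm_real_root:
  assumes S: "symm A n"
    and z: "poly (char_poly (map_mat complex_of_real A)) z = 0"
  shows "z \<in> \<real>"
proof -
  have A: "A \<in> carrier_mat n n" using S unfolding symm_def by auto
  define C where "C = map_mat complex_of_real A"
  have C: "C \<in> carrier_mat n n" using A unfolding C_def by auto
  have "eigenvalue C z" using z eigenvalue_root_char_poly[OF C] unfolding C_def by simp
  then obtain w where ev: "eigenvector C w z" unfolding eigenvalue_def by auto
  hence w: "w \<in> carrier_vec n" and w0: "w \<noteq> 0\<^sub>v n" and Cw: "C *\<^sub>v w = z \<cdot>\<^sub>v w"
    using C unfolding eigenvector_def by auto
  define s where "s = (\<Sum>i<n. \<Sum>j<n. cnj (w$i) * C $$ (i,j) * w $ j)"
  define r where "r = (\<Sum>i<n. cnj (w$i) * w$i)"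
  have "s = (\<Sum>i<n. cnj (w$i) * (C *\<^sub>v w) $ i)"
    unfolding s_def using C w
    by (auto simp: scalar_prod_def sum_distrib_left mult.assoc atLeast0LessThan intro!: sum.cong)
  also have "\<dots> = z * r" unfolding Cw r_def using w
    by (auto simp: sum_distrib_left intro!: sum.cong)
  finally have sz: "s = z * r" .
  have "cnj s = (\<Sum>i<n. \<Sum>j<n. w$i * C $$ (i,j) * cnj (w $ j))"
    unfolding s_def using C A by (auto simp: C_def intro!: sum.cong)
  also have "\<dots> = (\<Sum>j<n. \<Sum>i<n. w$i * C $$ (i,j) * cnj (w $ j))"
    by (rule sum.swap)
  also have "\<dots> = s" unfolding s_def using S C
    by (auto simp: C_def symm_def intro!: sum.cong)
  finally have cs: "cnj s = s" .
  have rr: "r = complex_of_real (\<Sum>i<n. (cmod (w$i))^2)"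
    unfolding r_def of_real_sum by (rule sum.cong, simp, metis complex_norm_square mult.commute)
  have "\<exists>i<n. w $ i \<noteq> 0" using w w0 by (metis eq_vecI carrier_vecD index_zero_vec)
  then obtain i where i: "i < n" "w $ i \<noteq> 0" by auto
  have "(\<Sum>i<n. (cmod (w$i))^2) > 0"
    by (rule sum_pos2[of _ i], insert i, auto)
  hence r0: "Re r > 0" "Im r = 0" unfolding rr by auto
  have "s \<in> \<real>" using cs by (metis Reals_cnj_iff)
  hence "Im s = 0" by (simp add: complex_is_Real_iff)
  hence "Im (z * r) = 0" using sz by simp
  hence "Im z * Re r = 0" using r0 by simp
  hence "Im z = 0" using r0 by simp
  thus ?thesis by (simp add: complex_is_Real_iff)
qed

lemma proots_linear_prod: "proots (\<Prod>e\<leftarrow>es. [:- e, 1:]) = mset (es :: 'a :: idom list)"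
proof (induct es)
  case (Cons e es)
  have nz: "(\<Prod>e\<leftarrow>es. [:- e, 1:]) \<noteq> (0 :: 'a poly)"
    by (subst prod_list_zero_iff, auto)
  have "proots ([:- e, 1:] * (\<Prod>e\<leftarrow>es. [:- e, 1:])) = proots [:- e, 1:] + proots (\<Prod>e\<leftarrow>es. [:- e, 1:])"
    by (rule proots_mult, insert nz, auto)
  thus ?case using Cons by (simp only: list.map prod_list.Cons proots_linear_factor, simp)
qed simp

lemma symm_split:
  assumes S: "symm A n"
  shows "\<exists>es. char_poly A = (\<Prod>e\<leftarrow>es. [:- e, 1:]) \<and> length es = n"
proof -
  have A: "A \<in> carrier_mat n n" using S unfolding symm_def by auto
  define C where "C = map_mat complex_of_real A"
  have C: "C \<in> carrier_mat n n" using A unfolding C_def by auto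
  obtain as where cp: "char_poly C = (\<Prod>a\<leftarrow>as. [:- a, 1:])" and len: "length as = n"
    using char_poly_factorized[OF C] by auto
  have hom: "char_poly C = map_poly of_real (char_poly A)"
    unfolding C_def by (rule of_real_hom.char_poly_hom[OF A])
  have real: "a \<in> \<real>" if "a \<in> set as" for a
  proof -
    have "poly (char_poly C) a = 0" unfolding cp using that
      by (auto simp: poly_prod_list prod_list_zero_iff)
    thus ?thesis using symm_real_root[OF S] unfolding C_def by auto
  qed
  interpret mh: map_poly_inj_comm_ring_hom "of_real :: real \<Rightarrow> complex" ..
  define es where "es = map Re as"
  have "map_poly of_real (\<Prod>e\<leftarrow>es. [:- e, 1:]) = (\<Prod>a\<leftarrow>as. [:- a, 1:])"
    unfolding es_def using real
  proof (induct as)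
    case (Cons a as)
    have "of_real (Re a) = a" using Cons(2) by (simp add: complex_is_Real_iff complex_eq_iff)
    thus ?case using Cons by (simp only: list.map prod_list.Cons mh.hom_mult o_apply, simp)
  qed simp
  hence "map_poly (of_real :: real \<Rightarrow> complex) (\<Prod>e\<leftarrow>es. [:- e, 1:]) = map_poly of_real (char_poly A)"
    using cp hom by simp
  hence "(\<Prod>e\<leftarrow>es. [:- e, 1:]) = char_poly A" by (rule mh.injectivity)
  moreover have "length es = n" using len unfolding es_def by auto
  ultimately show ?thesis by metis
qed


lemma scalar_transpose:
  assumes M: "M \<in> carrier_mat n m" and x: "x \<in> carrier_vec n" and y: "y \<in> carrier_vec m"
  shows "x \<bullet> (M *\<^sub>v y) = (transpose_mat M *\<^sub>v x) \<bullet> (y :: 'a :: comm_ring_1 vec)"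
proof -
  have "x \<bullet> (M *\<^sub>v y) = (\<Sum>i<n. x $ i * (\<Sum>j<m. M $$ (i,j) * y $ j))"
    using M x y by (auto simp: scalar_prod_def atLeast0LessThan intro!: sum.cong)
  also have "\<dots> = (\<Sum>i<n. \<Sum>j<m. x $ i * M $$ (i,j) * y $ j)"
    by (simp add: sum_distrib_left mult.assoc)
  also have "\<dots> = (\<Sum>j<m. \<Sum>i<n. x $ i * M $$ (i,j) * y $ j)" by (rule sum.swap)
  also have "\<dots> = (\<Sum>j<m. (\<Sum>i<n. M $$ (i,j) * x $ i) * y $ j)"
    by (intro sum.cong refl, subst sum_distrib_right, intro sum.cong refl, simp)
  also have "\<dots> = (transpose_mat M *\<^sub>v x) \<bullet> y"
    using M x y by (auto simp: scalar_prod_def atLeast0LessThan intro!: sum.cong)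
  finally show ?thesis .
qed

lemma symm_transpose: "symm A n \<Longrightarrow> transpose_mat A = A"
  unfolding symm_def by (intro eq_matI, auto)

lemma symm_scalar:
  assumes S: "symm A n" and x: "x \<in> carrier_vec n" and y: "y \<in> carrier_vec n"
  shows "x \<bullet> (A *\<^sub>v y) = (A *\<^sub>v x) \<bullet> y"
  using scalar_transpose[of A n n x y] S x y symm_transpose[OF S] unfolding symm_def by auto

lemma orth_scalar:
  assumes W: "W \<in> carrier_mat n n" and WW: "transpose_mat W * W = 1\<^sub>m n"
    and x: "x \<in> carrier_vec n" and y: "y \<in> carrier_vec n"
  shows "(W *\<^sub>v x) \<bullet> (W *\<^sub>v (y :: real vec)) = x \<bullet> y"
proof -
  have "(W *\<^sub>v x) \<bullet> (W *\<^sub>v y) = (transpose_mat W *\<^sub>v (W *\<^sub>v x)) \<bullet> y"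
    by (rule scalar_transpose[OF W], insert W x y, auto)
  also have "transpose_mat W *\<^sub>v (W *\<^sub>v x) = (transpose_mat W * W) *\<^sub>v x"
    using W x by (subst assoc_mult_mat_vec, auto)
  finally show ?thesis unfolding WW using x by simp
qed

lemma onb_completion:
  assumes v: "v \<in> carrier_vec n" and vv: "v \<bullet> v = (1::real)"
  shows "\<exists>ws. length ws = n \<and> set ws \<subseteq> carrier_vec n \<and> ws ! 0 = v \<and>
     (\<forall>i<n. \<forall>j<n. ws ! i \<bullet> ws ! j = (if i = j then 1 else 0))"
proof -
  interpret cof_vec_space n "TYPE(real)" .
  have v0: "v \<noteq> 0\<^sub>v n" using vv v by auto
  define b where "b = basis_completion v"
  note bc = basis_completion[OF v v0, folded b_def]
  define ws0 where "ws0 = gram_schmidt n b"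
  note gs = gram_schmidt_result[OF bc(2) bc(4) bc(5) ws0_def]
  have n: "0 < n" using v0 v by (cases n, auto)
  from bc(6,7) n obtain vs where bv: "b = v # vs" by (cases b, auto)
  have "hd ws0 = v" unfolding ws0_def bv by (rule gram_schmidt_hd[OF v])
  moreover have "ws0 \<noteq> []" using gs(4) bc(6) n by auto
  ultimately have hd0: "ws0 ! 0 = v" by (simp add: hd_conv_nth)
  define ws where "ws = map (\<lambda>w. (1 / sqrt (w \<bullet> w)) \<cdot>\<^sub>v w) ws0"
  have len: "length ws = n" unfolding ws_def using gs(4) bc(6) by simp
  have carr: "set ws \<subseteq> carrier_vec n" unfolding ws_def using gs(3) by auto
  have ws0i: "ws0 ! i \<in> carrier_vec n" if "i < n" for i using gs(3,4) bc(6) that by auto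
  have pos: "ws0 ! i \<bullet> ws0 ! i > 0" if "i < n" for i
  proof -
    have "ws0 ! i \<bullet>c ws0 ! i \<noteq> 0" using gs(2,4) bc(6) that unfolding corthogonal_def by auto
    moreover have "ws0 ! i \<bullet>c ws0 ! i \<ge> 0" using conjugate_square_ge_0_vec[of "ws0 ! i"] by simp
    ultimately show ?thesis by simp
  qed
  have "ws ! i \<bullet> ws ! j = (if i = j then 1 else 0)" if i: "i < n" and j: "j < n" for i j
  proof -
    have "ws ! i \<bullet> ws ! j = (1 / sqrt (ws0!i \<bullet> ws0!i)) * (1 / sqrt (ws0!j \<bullet> ws0!j)) * (ws0 ! i \<bullet> ws0 ! j)"
      unfolding ws_def using i j gs(4) bc(6) ws0i[OF i] ws0i[OF j] by simp
    also have "\<dots> = (if i = j then 1 else 0)"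
    proof (cases "i = j")
      case True
      with pos[OF i] show ?thesis by (simp add: real_sqrt_mult[symmetric])
    next
      case False
      hence "ws0 ! i \<bullet>c ws0 ! j = 0" using gs(2,4) bc(6) i j unfolding corthogonal_def by auto
      with False show ?thesis by simp
    qed
    finally show ?thesis .
  qed
  moreover have "ws ! 0 = v"
  proof -
    show ?thesis unfolding ws_def using hd0 vv gs(4) bc(6) n by simp
  qed
  ultimately show ?thesis using len carr by blast
qed


lemma row_vCons:
  assumes "M \<in> carrier_mat nr (Suc m)" "i < nr"
  shows "row M i = vCons (M $$ (i,0)) (vec m (\<lambda>j. M $$ (i, Suc j)))"
  using assms by (auto simp: row_def vec_Suc o_def)

lemma spectral_ind:
  assumes "symm A n" "char_poly A = (\<Prod>e\<leftarrow>es. [:- e, 1:])"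
  shows "\<exists>qs. length qs = n \<and> (\<forall>i<n. qs ! i \<in> carrier_vec n \<and> A *\<^sub>v qs ! i = es ! i \<cdot>\<^sub>v qs ! i)
     \<and> (\<forall>i<n. \<forall>j<n. qs ! i \<bullet> qs ! j = (if i = j then 1 else 0))"
  using assms
proof (induct es arbitrary: n A)
  case Nil
  have A: "A \<in> carrier_mat n n" using Nil unfolding symm_def by auto
  from degree_monic_char_poly[OF A] Nil(2) have "n = 0" by simp
  thus ?case by auto
next
  case (Cons e es n A)
  have S: "symm A n" by fact
  have A: "A \<in> carrier_mat n n" using S unfolding symm_def by auto
  have cp: "char_poly A = [:-e,1:] * (\<Prod>e\<leftarrow>es. [:- e, 1:])" using Cons(3) by simp
  have "eigenvalue A e" unfolding eigenvalue_root_char_poly[OF A] cp by simp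
  from find_eigenvector[OF A this] have ev: "eigenvector A (find_eigenvector A e) e" .
  define v0 where "v0 = find_eigenvector A e"
  have v0: "v0 \<in> carrier_vec n" and v00: "v0 \<noteq> 0\<^sub>v n" and Av0: "A *\<^sub>v v0 = e \<cdot>\<^sub>v v0"
    using ev A unfolding eigenvector_def v0_def by auto
  have n0: "n \<noteq> 0" using v0 v00 by auto
  then obtain n' where nn: "n = Suc n'" by (cases n, auto)
  have pos: "v0 \<bullet> v0 > 0" using conjugate_square_greater_0_vec[OF v0] v00 by simp
  define v where "v = (1 / sqrt (v0 \<bullet> v0)) \<cdot>\<^sub>v v0"
  have v: "v \<in> carrier_vec n" unfolding v_def using v0 by simp
  have vv: "v \<bullet> v = 1" unfolding v_def using v0 pos by (simp add: real_sqrt_mult[symmetric])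
  have Av: "A *\<^sub>v v = e \<cdot>\<^sub>v v" unfolding v_def using mult_mat_vec[OF A v0] Av0 v0
    by (simp add: smult_smult_assoc mult.commute)
  obtain ws where wsl: "length ws = n" and wsc: "set ws \<subseteq> carrier_vec n" and ws0: "ws ! 0 = v"
    and orth: "\<forall>i<n. \<forall>j<n. ws ! i \<bullet> ws ! j = (if i = j then 1 else 0)"
    using onb_completion[OF v vv] by blast
  have wsi: "ws ! i \<in> carrier_vec n" if "i < n" for i using wsc wsl that by auto
  define W where "W = mat_of_cols n ws"
  have W: "W \<in> carrier_mat n n" unfolding W_def using wsl by auto
  have colW: "col W i = ws ! i" if "i < n" for i unfolding W_def using wsl wsi that by simp
  have WW: "transpose_mat W * W = 1\<^sub>m n"
    by (rule eq_matI, insert W orth colW, auto)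
  have WW': "W * transpose_mat W = 1\<^sub>m n"
    by (rule mat_mult_left_right_inverse[OF _ W WW], insert W, auto)
  define A' where "A' = transpose_mat W * (A * W)"
  have A'c: "A' \<in> carrier_mat n n" unfolding A'_def using W A by auto
  have A'e: "A' $$ (i,j) = ws ! i \<bullet> (A *\<^sub>v ws ! j)" if "i < n" "j < n" for i j
    unfolding A'_def using that W A colW by (auto simp: mult_mat_vec_def)
  have A'0: "A' $$ (i,0) = (if i = 0 then e else 0)" if "i < n" for i
    using A'e[OF that] n0 ws0 Av orth that wsi v by auto
  have A'0': "A' $$ (0,j) = (if j = 0 then e else 0)" if "j < n" for j
  proof -
    have "A' $$ (0,j) = (A *\<^sub>v ws ! 0) \<bullet> ws ! j" using A'e[OF _ that] n0 symm_scalar[OF S wsi wsi] that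
      by auto
    also have "\<dots> = e * (ws ! 0 \<bullet> ws ! j)" unfolding ws0 Av using v wsi[OF that] by simp
    finally show ?thesis using orth n0 that ws0 by auto
  qed
  have A'sym: "A' $$ (i,j) = A' $$ (j,i)" if "i < n" "j < n" for i j
    using A'e that symm_scalar[OF S wsi wsi] comm_scalar_prod[OF _ wsi[OF that(1)], of "A *\<^sub>v ws ! j"]
      A wsi by auto
  define A3 where "A3 = mat n' n' (\<lambda>(i,j). A' $$ (Suc i, Suc j))"
  have S3: "symm A3 n'" unfolding symm_def A3_def using A'sym nn by auto
  have A3c: "A3 \<in> carrier_mat n' n'" unfolding A3_def by auto
  have blk: "A' = four_block_mat (mat 1 1 (\<lambda>_. e)) (0\<^sub>m 1 n') (0\<^sub>m n' 1) A3"
    by (rule eq_matI, insert A'c A'0 A'0' nn, auto simp: A3_def)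
  have "similar_mat A' A" unfolding similar_mat_def similar_mat_wit_def
    by (rule exI[of _ "transpose_mat W"], rule exI[of _ W], insert A'c W A WW WW',
       auto simp: Let_def A'_def assoc_mult_mat[of _ n n _ n _ n])
  hence "char_poly A = char_poly A'" using char_poly_similar by metis
  also have "\<dots> = char_poly (mat 1 1 (\<lambda>_. e)) * char_poly A3"
    unfolding blk by (rule char_poly_four_block_zeros_col, auto simp: A3_def)
  also have "char_poly (mat 1 1 (\<lambda>_. e)) = [:-e, 1:]"
    by (simp add: char_poly_defs det_def sign_def)
  finally have "char_poly A3 = (\<Prod>e\<leftarrow>es. [:- e, 1:])" unfolding cp
    by (metis mult_cancel_left pCons_eq_0_iff zero_neq_one)
  from Cons(1)[OF S3 this] obtain qs3 where q3l: "length qs3 = n'"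
    and q3e: "\<forall>i<n'. qs3 ! i \<in> carrier_vec n' \<and> A3 *\<^sub>v qs3 ! i = es ! i \<cdot>\<^sub>v qs3 ! i"
    and q3o: "\<forall>i<n'. \<forall>j<n'. qs3 ! i \<bullet> qs3 ! j = (if i = j then 1 else 0)" by blast
  define ys where "ys = unit_vec n 0 # map (vCons 0) qs3"
  have ysl: "length ys = n" unfolding ys_def using q3l nn by simp
  have ysc: "ys ! i \<in> carrier_vec n" if "i < n" for i
    using that q3e q3l nn unfolding ys_def by (cases i, auto)
  have yso: "ys ! i \<bullet> ys ! j = (if i = j then 1 else 0)" if "i < n" "j < n" for i j
  proof (cases i)
    case 0
    then show ?thesis using that q3e q3l nn unfolding ys_def by (cases j, auto)
  next
    case (Suc i')
    then show ?thesis using that q3e q3l q3o nn unfolding ys_def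
      by (cases j, auto simp: comm_scalar_prod[of _ n])
  qed
  have rowA': "row A' i = vCons (A' $$ (i,0)) (vec n' (\<lambda>j. A' $$ (i, Suc j)))" if "i < n" for i
    by (rule row_vCons, insert A'c nn that, auto)
  have yse: "A' *\<^sub>v ys ! i = (e # es) ! i \<cdot>\<^sub>v ys ! i" if "i < n" for i
  proof (cases i)
    case 0
    show ?thesis unfolding 0 ys_def
      by (rule eq_vecI, insert A'c A'0 n0, auto simp: A'sym)
  next
    case (Suc i')
    hence i': "i' < n'" using that nn by auto
    have q: "qs3 ! i' \<in> carrier_vec n'" using q3e i' by auto
    have "A' *\<^sub>v vCons 0 (qs3 ! i') = vCons 0 (A3 *\<^sub>v qs3 ! i')"
    proof (rule eq_vecI)
      fix l assume "l < dim_vec (vCons 0 (A3 *\<^sub>v qs3 ! i'))"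
      hence l: "l < n" using A3c nn by auto
      show "(A' *\<^sub>v vCons 0 (qs3 ! i')) $ l = vCons 0 (A3 *\<^sub>v qs3 ! i') $ l"
      proof (cases l)
        case 0
        have "vec n' (\<lambda>j. A' $$ (0, Suc j)) = 0\<^sub>v n'" using A'0' nn by auto
        thus ?thesis using l A'c rowA'[OF l] 0 q by simp
      next
        case (Suc l')
        have "vec n' (\<lambda>j. A' $$ (l, Suc j)) = row A3 l'" using Suc l nn
          by (auto simp: A3_def)
        thus ?thesis using l A'c rowA'[OF l] Suc q A3c nn by simp
      qed
    qed (insert A'c A3c nn, auto)
    also have "\<dots> = es ! i' \<cdot>\<^sub>v vCons 0 (qs3 ! i')" using q3e i' q
      by (intro eq_vecI, auto simp: vec_index_vCons)
    finally show ?thesis unfolding Suc ys_def using i' q3l by simp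
  qed
  define qs where "qs = map (\<lambda>y. W *\<^sub>v y) ys"
  have WA': "W * A' = A * W" unfolding A'_def using W A WW'
    by (simp add: assoc_mult_mat[symmetric, of W n n "transpose_mat W" n "A * W" n])
  show ?case
  proof (intro exI[of _ qs] conjI allI impI)
    show "length qs = n" unfolding qs_def using ysl by simp
    fix i assume i: "i < n"
    show "qs ! i \<in> carrier_vec n" unfolding qs_def using ysl i W ysc[OF i] by simp
    have "A *\<^sub>v qs ! i = (A * W) *\<^sub>v ys ! i" unfolding qs_def using ysl i W A ysc[OF i] by simp
    also have "\<dots> = W *\<^sub>v (A' *\<^sub>v ys ! i)" unfolding WA'[symmetric] using W A'c ysc[OF i] by simp
    also have "\<dots> = (e # es) ! i \<cdot>\<^sub>v qs ! i" unfolding yse[OF i] qs_def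
      using mult_mat_vec[OF W ysc[OF i]] ysl i by simp
    finally show "A *\<^sub>v qs ! i = (e # es) ! i \<cdot>\<^sub>v qs ! i" .
    fix j assume j: "j < n"
    show "qs ! i \<bullet> qs ! j = (if i = j then 1 else 0)" unfolding qs_def
      using orth_scalar[OF W WW ysc[OF i] ysc[OF j]] yso[OF i j] ysl i j by simp
  qed
qed


lemma prod_list_sort_eq: "(\<Prod>e\<leftarrow>sort es. f e) = (\<Prod>e\<leftarrow>es. (f e :: 'a :: comm_monoid_mult))"
  by (metis mset_map mset_sort prod_mset_prod_list)

lemma spectral_eig:
  assumes S: "symm A n"
  shows "\<exists>qs. length qs = n \<and> (\<forall>i<n. qs ! i \<in> carrier_vec n \<and> A *\<^sub>v qs ! i = eig A (Suc i) \<cdot>\<^sub>v qs ! i)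
     \<and> (\<forall>i<n. \<forall>j<n. qs ! i \<bullet> qs ! j = (if i = j then 1 else 0))
     \<and> (\<forall>i j. i \<le> j \<longrightarrow> j < n \<longrightarrow> eig A (Suc i) \<le> eig A (Suc j))"
proof -
  obtain es where cp: "char_poly A = (\<Prod>e\<leftarrow>es. [:- e, 1:])" and len: "length es = n"
    using symm_split[OF S] by auto
  define ss where "ss = sort es"
  have cp2: "char_poly A = (\<Prod>e\<leftarrow>ss. [:- e, 1:])" unfolding cp ss_def prod_list_sort_eq ..
  have eig: "eig A (Suc i) = ss ! i" for i
    unfolding eig_def cp proots_linear_prod ss_def by simp
  have sorted: "sorted ss" unfolding ss_def by simp
  have lss: "length ss = n" unfolding ss_def using len by simp
  from spectral_ind[OF S cp2] obtain qs where
    "length qs = n \<and> (\<forall>i<n. qs ! i \<in> carrier_vec n \<and> A *\<^sub>v qs ! i = ss ! i \<cdot>\<^sub>v qs ! i)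
     \<and> (\<forall>i<n. \<forall>j<n. qs ! i \<bullet> qs ! j = (if i = j then 1 else 0))" by blast
  moreover have "\<forall>i j. i \<le> j \<longrightarrow> j < n \<longrightarrow> ss ! i \<le> ss ! j"
    using sorted lss by (auto intro: sorted_nth_mono)
  ultimately show ?thesis unfolding eig by blast
qed

lemma orth_scalar_gen:
  assumes W: "W \<in> carrier_mat n p" and WW: "transpose_mat W * W = 1\<^sub>m p"
    and x: "x \<in> carrier_vec p" and y: "y \<in> carrier_vec p"
  shows "(W *\<^sub>v x) \<bullet> (W *\<^sub>v (y :: real vec)) = x \<bullet> y"
proof -
  have "(W *\<^sub>v x) \<bullet> (W *\<^sub>v y) = (transpose_mat W *\<^sub>v (W *\<^sub>v x)) \<bullet> y"
    by (rule scalar_transpose[OF W], insert W x y, auto)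
  also have "transpose_mat W *\<^sub>v (W *\<^sub>v x) = (transpose_mat W * W) *\<^sub>v x"
    using W x by (subst assoc_mult_mat_vec, auto)
  finally show ?thesis unfolding WW using x by simp
qed

lemma orth_inj:
  fixes x :: "real vec"
  assumes W: "W \<in> carrier_mat n p" and WW: "transpose_mat W * W = 1\<^sub>m p"
    and x: "x \<in> carrier_vec p" and z: "W *\<^sub>v x = 0\<^sub>v n"
  shows "x = 0\<^sub>v p"
proof -
  have "x \<bullet> x = 0" using orth_scalar_gen[OF W WW x x] z by simp
  thus ?thesis using x conjugate_square_eq_0_vec[OF x] by simp
qed

definition colsel :: "real vec list \<Rightarrow> nat \<Rightarrow> nat \<Rightarrow> (nat \<Rightarrow> nat) \<Rightarrow> real mat" where
  "colsel qs n p \<sigma> = mat n p (\<lambda>(i,l). qs ! (\<sigma> l) $ i)"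

lemma colsel:
  assumes qs: "\<forall>i<n. qs ! i \<in> carrier_vec n"
    and orth: "\<forall>i<n. \<forall>j<n. qs ! i \<bullet> qs ! j = (if i = j then 1 else 0)"
    and sig: "\<forall>l<p. \<sigma> l < n" and inj: "inj_on \<sigma> {..<p}"
  shows "colsel qs n p \<sigma> \<in> carrier_mat n p"
    "transpose_mat (colsel qs n p \<sigma>) * colsel qs n p \<sigma> = 1\<^sub>m p"
    "l < p \<Longrightarrow> col (colsel qs n p \<sigma>) l = qs ! (\<sigma> l)"
proof -
  let ?Q = "colsel qs n p \<sigma>"
  show Q: "?Q \<in> carrier_mat n p" unfolding colsel_def by auto
  show col: "col ?Q l = qs ! (\<sigma> l)" if "l < p" for l
    using that sig qs unfolding colsel_def by (intro eq_vecI, auto)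
  show "transpose_mat ?Q * ?Q = 1\<^sub>m p"
  proof (rule eq_matI)
    fix i j assume "i < dim_row (1\<^sub>m p)" "j < dim_col (1\<^sub>m p)"
    hence ij: "i < p" "j < p" by auto
    have "(transpose_mat ?Q * ?Q) $$ (i,j) = qs ! (\<sigma> i) \<bullet> qs ! (\<sigma> j)"
      using ij Q col by simp
    also have "\<dots> = (if i = j then 1 else 0)" using orth sig ij inj_onD[OF inj, of i j] by auto
    finally show "(transpose_mat ?Q * ?Q) $$ (i,j) = 1\<^sub>m p $$ (i,j)" using ij by simp
  qed (insert Q, auto)
qed

lemma rayleigh:
  assumes A: "A \<in> carrier_mat n n"
    and qs: "\<forall>i<n. qs ! i \<in> carrier_vec n \<and> A *\<^sub>v qs ! i = ev i \<cdot>\<^sub>v qs ! i"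
    and orth: "\<forall>i<n. \<forall>j<n. qs ! i \<bullet> qs ! j = (if i = j then 1 else 0)"
    and sig: "\<forall>l<p. \<sigma> l < n" and inj: "inj_on \<sigma> {..<p}"
    and a: "a \<in> carrier_vec p"
  shows "(colsel qs n p \<sigma> *\<^sub>v a) \<bullet> (A *\<^sub>v (colsel qs n p \<sigma> *\<^sub>v a)) = (\<Sum>l<p. (a $ l)^2 * ev (\<sigma> l))"
    "(colsel qs n p \<sigma> *\<^sub>v a) \<bullet> (colsel qs n p \<sigma> *\<^sub>v a) = (\<Sum>l<p. (a $ l)^2)"
proof -
  let ?Q = "colsel qs n p \<sigma>"
  have qsc: "\<forall>i<n. qs ! i \<in> carrier_vec n" using qs by auto
  note c = colsel[OF qsc orth sig inj]
  define d where "d = vec p (\<lambda>l. ev (\<sigma> l) * a $ l)"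
  have d: "d \<in> carrier_vec p" unfolding d_def by auto
  have "A *\<^sub>v (?Q *\<^sub>v a) = (A * ?Q) *\<^sub>v a" using A c(1) a by simp
  also have "\<dots> = ?Q *\<^sub>v d"
  proof (rule eq_vecI)
    fix i assume "i < dim_vec (?Q *\<^sub>v d)"
    hence i: "i < n" using c(1) by auto
    have "((A * ?Q) *\<^sub>v a) $ i = (\<Sum>l<p. (A * ?Q) $$ (i,l) * a $ l)"
      using i A c(1) a by (auto simp: scalar_prod_def atLeast0LessThan simp del: assoc_mult_mat_vec)
    also have "\<dots> = (\<Sum>l<p. ev (\<sigma> l) * qs ! (\<sigma> l) $ i * a $ l)"
    proof (rule sum.cong[OF refl])
      fix l assume "l \<in> {..<p}"
      hence l: "l < p" by auto
      have qc: "qs ! (\<sigma> l) \<in> carrier_vec n" using qs sig l by auto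
      have "(A * ?Q) $$ (i,l) = (A *\<^sub>v col ?Q l) $ i" using i l A c(1) by simp
      also have "\<dots> = (ev (\<sigma> l) \<cdot>\<^sub>v qs ! (\<sigma> l)) $ i" using c(3)[OF l] qs sig l by simp
      also have "\<dots> = ev (\<sigma> l) * qs ! (\<sigma> l) $ i" by (rule index_smult_vec, insert qc i, auto)
      finally show "(A * ?Q) $$ (i,l) * a $ l = ev (\<sigma> l) * qs ! (\<sigma> l) $ i * a $ l" by simp
    qed
    also have "\<dots> = (?Q *\<^sub>v d) $ i"
      using i c(1) d by (auto simp: scalar_prod_def atLeast0LessThan d_def colsel_def intro!: sum.cong)
    finally show "((A * ?Q) *\<^sub>v a) $ i = (?Q *\<^sub>v d) $ i" .
  qed (insert A c(1), auto)
  finally have "(?Q *\<^sub>v a) \<bullet> (A *\<^sub>v (?Q *\<^sub>v a)) = a \<bullet> d"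
    using orth_scalar_gen[OF c(1) c(2) a d] by simp
  also have "\<dots> = (\<Sum>l<p. (a $ l)^2 * ev (\<sigma> l))"
    using a d by (auto simp: scalar_prod_def atLeast0LessThan d_def power2_eq_square intro!: sum.cong)
  finally show "(?Q *\<^sub>v a) \<bullet> (A *\<^sub>v (?Q *\<^sub>v a)) = (\<Sum>l<p. (a $ l)^2 * ev (\<sigma> l))" .
  show "(?Q *\<^sub>v a) \<bullet> (?Q *\<^sub>v a) = (\<Sum>l<p. (a $ l)^2)"
    using orth_scalar_gen[OF c(1) c(2) a a] a
    by (auto simp: scalar_prod_def atLeast0LessThan power2_eq_square)
qed

lemma kernel_exists:
  fixes M :: "real mat"
  assumes M: "M \<in> carrier_mat r s" and rs: "r < s"
  shows "\<exists>y. y \<in> carrier_vec s \<and> y \<noteq> 0\<^sub>v s \<and> M *\<^sub>v y = 0\<^sub>v r"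
proof -
  define c where "c = (\<lambda>i. vec s (\<lambda>j. if i < r then M $$ (i,j) else (0::real)))"
  define M' where "M' = mat\<^sub>r s s (\<lambda>i. if i = r then 0\<^sub>v s else c i)"
  have M': "M' \<in> carrier_mat s s" unfolding M'_def by auto
  have "det M' = 0" unfolding M'_def by (rule det_row_0[OF rs], auto simp: c_def)
  then obtain y where y: "y \<in> carrier_vec s" "y \<noteq> 0\<^sub>v s" "M' *\<^sub>v y = 0\<^sub>v s"
    using det_0_iff_vec_prod_zero[OF M'] by auto
  have "M *\<^sub>v y = 0\<^sub>v r"
  proof (rule eq_vecI)
    fix i assume "i < dim_vec (0\<^sub>v r :: real vec)"
    hence i: "i < r" by auto
    have "row M i = row M' i" using i rs M unfolding M'_def c_def by (auto simp: row_def)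
    hence "(M *\<^sub>v y) $ i = (M' *\<^sub>v y) $ i" using i rs M M' by simp
    thus "(M *\<^sub>v y) $ i = 0\<^sub>v r $ i" using y(3) i rs by simp
  qed (insert M, auto)
  with y show ?thesis by auto
qed


lemma three_family:
  fixes F1 F2 F3 :: "real mat"
  assumes F1: "F1 \<in> carrier_mat n p" and F2: "F2 \<in> carrier_mat n q" and F3: "F3 \<in> carrier_mat n r"
    and i1: "\<And>a. a \<in> carrier_vec p \<Longrightarrow> F1 *\<^sub>v a = 0\<^sub>v n \<Longrightarrow> a = 0\<^sub>v p"
    and i2: "\<And>a. a \<in> carrier_vec q \<Longrightarrow> F2 *\<^sub>v a = 0\<^sub>v n \<Longrightarrow> a = 0\<^sub>v q"
    and i3: "\<And>a. a \<in> carrier_vec r \<Longrightarrow> F3 *\<^sub>v a = 0\<^sub>v n \<Longrightarrow> a = 0\<^sub>v r"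
    and dim: "2 * n < p + q + r"
  shows "\<exists>a b c. a \<in> carrier_vec p \<and> b \<in> carrier_vec q \<and> c \<in> carrier_vec r \<and>
     F1 *\<^sub>v a = F2 *\<^sub>v b \<and> F1 *\<^sub>v a = F3 *\<^sub>v c \<and> F1 *\<^sub>v a \<noteq> 0\<^sub>v n"
proof -
  define rf where "rf = (\<lambda>i. if i < n then row F1 i @\<^sub>v ((- row F2 i) @\<^sub>v 0\<^sub>v r)
     else row F1 (i - n) @\<^sub>v (0\<^sub>v q @\<^sub>v (- row F3 (i - n))))"
  have rfc: "rf i \<in> carrier_vec (p + (q + r))" if "i < 2 * n" for i
    using that F1 F2 F3 unfolding rf_def by (auto intro!: append_carrier_vec)
  define M where "M = mat (2 * n) (p + (q + r)) (\<lambda>(i,j). rf i $ j)"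
  have M: "M \<in> carrier_mat (2 * n) (p + (q + r))" unfolding M_def by auto
  have rowM: "row M i = rf i" if i: "i < 2 * n" for i
  proof (rule eq_vecI)
    fix j assume "j < dim_vec (rf i)"
    hence j: "j < p + (q + r)" using rfc[OF i] by auto
    show "row M i $ j = rf i $ j" using i j unfolding M_def by simp
  next
    show "dim_vec (row M i) = dim_vec (rf i)" using rfc[OF i] unfolding M_def by simp
  qed
  have d2: "2 * n < p + (q + r)" using dim by simp
  obtain y where y: "y \<in> carrier_vec (p + (q + r))" "y \<noteq> 0\<^sub>v (p + (q + r))" "M *\<^sub>v y = 0\<^sub>v (2 * n)"
    using kernel_exists[OF M d2] by blast
  define a where "a = vec_first y p"
  define z where "z = vec_last y (q + r)"
  define b where "b = vec_first z q"
  define c where "c = vec_last z r"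
  have yabc: "y = a @\<^sub>v (b @\<^sub>v c)" unfolding a_def z_def b_def c_def using y(1) by simp
  have a: "a \<in> carrier_vec p" and b: "b \<in> carrier_vec q" and c: "c \<in> carrier_vec r"
    unfolding a_def b_def c_def by auto
  have e1: "(F1 *\<^sub>v a) $ i = (F2 *\<^sub>v b) $ i" if i: "i < n" for i
  proof -
    have "0 = (M *\<^sub>v y) $ i" using y(3) i by simp
    also have "\<dots> = rf i \<bullet> y" using M i rowM[of i] by simp
    also have "\<dots> = row F1 i \<bullet> a + ((- row F2 i) \<bullet> b + 0\<^sub>v r \<bullet> c)" unfolding rf_def yabc
      using i F1 F2 a b c by (simp add: scalar_prod_append[of _ p _ "q + r"] scalar_prod_append[of _ q _ r])
    also have "\<dots> = (F1 *\<^sub>v a) $ i - (F2 *\<^sub>v b) $ i" using i F1 F2 a b c by simp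
    finally show ?thesis by simp
  qed
  have e2: "(F1 *\<^sub>v a) $ i = (F3 *\<^sub>v c) $ i" if i: "i < n" for i
  proof -
    have "0 = (M *\<^sub>v y) $ (n + i)" using y(3) i by simp
    also have "\<dots> = rf (n + i) \<bullet> y" using M i rowM[of "n + i"] by simp
    also have "\<dots> = row F1 i \<bullet> a + (0\<^sub>v q \<bullet> b + (- row F3 i) \<bullet> c)" unfolding rf_def yabc
      using i F1 F3 a b c by (simp add: scalar_prod_append[of _ p _ "q + r"] scalar_prod_append[of _ q _ r])
    also have "\<dots> = (F1 *\<^sub>v a) $ i - (F3 *\<^sub>v c) $ i" using i F1 F3 a b c by simp
    finally show ?thesis by simp
  qed
  have E1: "F1 *\<^sub>v a = F2 *\<^sub>v b" using e1 F1 F2 by (intro eq_vecI, auto)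
  have E2: "F1 *\<^sub>v a = F3 *\<^sub>v c" using e2 F1 F3 by (intro eq_vecI, auto)
  have nz: "F1 *\<^sub>v a \<noteq> 0\<^sub>v n"
  proof
    assume z0: "F1 *\<^sub>v a = 0\<^sub>v n"
    have "a = 0\<^sub>v p" using i1[OF a z0] .
    moreover have "b = 0\<^sub>v q" using i2[OF b] E1 z0 by simp
    moreover have "c = 0\<^sub>v r" using i3[OF c] E2 z0 by simp
    ultimately have "y = 0\<^sub>v p @\<^sub>v (0\<^sub>v q @\<^sub>v 0\<^sub>v r)" using yabc by simp
    also have "\<dots> = 0\<^sub>v (p + (q + r))" by (intro eq_vecI, auto)
    finally show False using y(2) by simp
  qed
  show ?thesis using a b c E1 E2 nz by blast
qed


lemma eig_upper:
  assumes S: "symm A n" and k: "1 \<le> k" "k \<le> n"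
    and F: "F \<in> carrier_mat n p" and H: "H \<in> carrier_mat n r"
    and iF: "\<And>a. a \<in> carrier_vec p \<Longrightarrow> F *\<^sub>v a = 0\<^sub>v n \<Longrightarrow> a = 0\<^sub>v p"
    and iH: "\<And>a. a \<in> carrier_vec r \<Longrightarrow> H *\<^sub>v a = 0\<^sub>v n \<Longrightarrow> a = 0\<^sub>v r"
    and dim: "n + k \<le> p + r"
    and bound: "\<And>a b. a \<in> carrier_vec p \<Longrightarrow> b \<in> carrier_vec r \<Longrightarrow> F *\<^sub>v a = H *\<^sub>v b \<Longrightarrow>
        F *\<^sub>v a \<noteq> 0\<^sub>v n \<Longrightarrow> (F *\<^sub>v a) \<bullet> (A *\<^sub>v (F *\<^sub>v a)) \<le> c * ((F *\<^sub>v a) \<bullet> (F *\<^sub>v a))"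
  shows "eig A k \<le> c"
proof -
  have A: "A \<in> carrier_mat n n" using S unfolding symm_def by auto
  obtain qs where ql: "length qs = n" and qe: "\<forall>i<n. qs ! i \<in> carrier_vec n \<and> A *\<^sub>v qs ! i = eig A (Suc i) \<cdot>\<^sub>v qs ! i"
    and qo: "\<forall>i<n. \<forall>j<n. qs ! i \<bullet> qs ! j = (if i = j then 1 else 0)"
    and mono: "\<forall>i j. i \<le> j \<longrightarrow> j < n \<longrightarrow> eig A (Suc i) \<le> eig A (Suc j)"
    using spectral_eig[OF S] by (elim exE conjE) (rule that, assumption+)
  have qc: "\<forall>i<n. qs ! i \<in> carrier_vec n" using qe by auto
  define m where "m = n - k + 1"
  define \<sigma> where "\<sigma> = (\<lambda>l. l + (k - 1))"
  have sig: "\<forall>l<m. \<sigma> l < n" unfolding m_def \<sigma>_def using k by auto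
  have inj: "inj_on \<sigma> {..<m}" unfolding \<sigma>_def by (auto intro: inj_onI)
  define Q where "Q = colsel qs n m \<sigma>"
  note cQ = colsel[OF qc qo sig inj, folded Q_def]
  have iQ: "x = 0\<^sub>v m" if "x \<in> carrier_vec m" "Q *\<^sub>v x = 0\<^sub>v n" for x
    using orth_inj[OF cQ(1) cQ(2) that] .
  have d: "2 * n < m + p + r" using dim k unfolding m_def by simp
  obtain a0 a b where a0: "a0 \<in> carrier_vec m" and a: "a \<in> carrier_vec p" and b: "b \<in> carrier_vec r"
    and e1: "Q *\<^sub>v a0 = F *\<^sub>v a" and e2: "Q *\<^sub>v a0 = H *\<^sub>v b" and nz: "Q *\<^sub>v a0 \<noteq> 0\<^sub>v n"
    using three_family[OF cQ(1) F H iQ iF iH d] by blast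
  define x where "x = Q *\<^sub>v a0"
  have R: "x \<bullet> (A *\<^sub>v x) = (\<Sum>l<m. (a0 $ l)^2 * eig A (Suc (\<sigma> l)))"
    "x \<bullet> x = (\<Sum>l<m. (a0 $ l)^2)"
    using rayleigh[OF A qe qo sig inj a0] unfolding x_def Q_def by auto
  have "eig A k * (x \<bullet> x) = (\<Sum>l<m. (a0 $ l)^2 * eig A k)" unfolding R by (simp add: sum_distrib_left mult.commute)
  also have "\<dots> \<le> x \<bullet> (A *\<^sub>v x)" unfolding R
  proof (rule sum_mono)
    fix l assume "l \<in> {..<m}"
    hence "eig A (Suc (k - 1)) \<le> eig A (Suc (\<sigma> l))" using mono sig unfolding \<sigma>_def by auto
    hence "eig A k \<le> eig A (Suc (\<sigma> l))" using k by simp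
    thus "(a0 $ l)^2 * eig A k \<le> (a0 $ l)^2 * eig A (Suc (\<sigma> l))" by (simp add: mult_left_mono)
  qed
  also have "\<dots> \<le> c * (x \<bullet> x)" unfolding x_def e1 by (rule bound[OF a b], insert e1 e2 nz, auto)
  finally have le: "eig A k * (x \<bullet> x) \<le> c * (x \<bullet> x)" .
  have xc: "x \<in> carrier_vec n" unfolding x_def using cQ(1) a0 by simp
  have "x \<bullet> x > 0" using conjugate_square_greater_0_vec[OF xc] nz unfolding x_def by simp
  thus ?thesis using le by simp
qed

lemma eig_lower:
  assumes S: "symm A n" and k: "1 \<le> k" "k \<le> n"
    and F: "F \<in> carrier_mat n p" and H: "H \<in> carrier_mat n r"
    and iF: "\<And>a. a \<in> carrier_vec p \<Longrightarrow> F *\<^sub>v a = 0\<^sub>v n \<Longrightarrow> a = 0\<^sub>v p"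
    and iH: "\<And>a. a \<in> carrier_vec r \<Longrightarrow> H *\<^sub>v a = 0\<^sub>v n \<Longrightarrow> a = 0\<^sub>v r"
    and dim: "2 * n < k + p + r"
    and bound: "\<And>a b. a \<in> carrier_vec p \<Longrightarrow> b \<in> carrier_vec r \<Longrightarrow> F *\<^sub>v a = H *\<^sub>v b \<Longrightarrow>
        F *\<^sub>v a \<noteq> 0\<^sub>v n \<Longrightarrow> (F *\<^sub>v a) \<bullet> (A *\<^sub>v (F *\<^sub>v a)) \<ge> c * ((F *\<^sub>v a) \<bullet> (F *\<^sub>v a))"
  shows "eig A k \<ge> c"
proof -
  have A: "A \<in> carrier_mat n n" using S unfolding symm_def by auto
  obtain qs where ql: "length qs = n" and qe: "\<forall>i<n. qs ! i \<in> carrier_vec n \<and> A *\<^sub>v qs ! i = eig A (Suc i) \<cdot>\<^sub>v qs ! i"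
    and qo: "\<forall>i<n. \<forall>j<n. qs ! i \<bullet> qs ! j = (if i = j then 1 else 0)"
    and mono: "\<forall>i j. i \<le> j \<longrightarrow> j < n \<longrightarrow> eig A (Suc i) \<le> eig A (Suc j)"
    using spectral_eig[OF S] by (elim exE conjE) (rule that, assumption+)
  have qc: "\<forall>i<n. qs ! i \<in> carrier_vec n" using qe by auto
  define m where "m = k"
  define \<sigma> where "\<sigma> = (\<lambda>l::nat. l)"
  have sig: "\<forall>l<m. \<sigma> l < n" unfolding m_def \<sigma>_def using k by auto
  have inj: "inj_on \<sigma> {..<m}" unfolding \<sigma>_def by (auto intro: inj_onI)
  define Q where "Q = colsel qs n m \<sigma>"
  note cQ = colsel[OF qc qo sig inj, folded Q_def]
  have iQ: "x = 0\<^sub>v m" if "x \<in> carrier_vec m" "Q *\<^sub>v x = 0\<^sub>v n" for x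
    using orth_inj[OF cQ(1) cQ(2) that] .
  have d: "2 * n < m + p + r" using dim k unfolding m_def by simp
  obtain a0 a b where a0: "a0 \<in> carrier_vec m" and a: "a \<in> carrier_vec p" and b: "b \<in> carrier_vec r"
    and e1: "Q *\<^sub>v a0 = F *\<^sub>v a" and e2: "Q *\<^sub>v a0 = H *\<^sub>v b" and nz: "Q *\<^sub>v a0 \<noteq> 0\<^sub>v n"
    using three_family[OF cQ(1) F H iQ iF iH d] by blast
  define x where "x = Q *\<^sub>v a0"
  have R: "x \<bullet> (A *\<^sub>v x) = (\<Sum>l<m. (a0 $ l)^2 * eig A (Suc (\<sigma> l)))"
    "x \<bullet> x = (\<Sum>l<m. (a0 $ l)^2)"
    using rayleigh[OF A qe qo sig inj a0] unfolding x_def Q_def by auto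
  have "c * (x \<bullet> x) \<le> x \<bullet> (A *\<^sub>v x)" unfolding x_def e1 by (rule bound[OF a b], insert e1 e2 nz, auto)
  also have "\<dots> \<le> (\<Sum>l<m. (a0 $ l)^2 * eig A k)" unfolding R
  proof (rule sum_mono)
    fix l assume "l \<in> {..<m}"
    hence "l \<le> k - 1" "k - 1 < n" using k unfolding m_def by auto
    hence "eig A (Suc (\<sigma> l)) \<le> eig A (Suc (k - 1))" using mono unfolding \<sigma>_def by blast
    hence "eig A (Suc (\<sigma> l)) \<le> eig A k" using k by simp
    thus "(a0 $ l)^2 * eig A (Suc (\<sigma> l)) \<le> (a0 $ l)^2 * eig A k" by (simp add: mult_left_mono)
  qed
  also have "\<dots> = eig A k * (x \<bullet> x)" unfolding R by (simp add: sum_distrib_left mult.commute)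
  finally have le: "c * (x \<bullet> x) \<le> eig A k * (x \<bullet> x)" .
  have xc: "x \<in> carrier_vec n" unfolding x_def using cQ(1) a0 by simp
  have "x \<bullet> x > 0" using conjugate_square_greater_0_vec[OF xc] nz unfolding x_def by simp
  thus ?thesis using le by simp
qed


lemma rayleigh_ge:
  assumes A: "A \<in> carrier_mat n n"
    and qs: "\<forall>i<n. qs ! i \<in> carrier_vec n \<and> A *\<^sub>v qs ! i = ev i \<cdot>\<^sub>v qs ! i"
    and orth: "\<forall>i<n. \<forall>j<n. qs ! i \<bullet> qs ! j = (if i = j then 1 else 0)"
    and sig: "\<forall>l<p. \<sigma> l < n" and inj: "inj_on \<sigma> {..<p}"
    and a: "a \<in> carrier_vec p" and ge: "\<forall>l<p. ev (\<sigma> l) \<ge> \<mu>"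
  shows "(colsel qs n p \<sigma> *\<^sub>v a) \<bullet> (A *\<^sub>v (colsel qs n p \<sigma> *\<^sub>v a)) \<ge> \<mu> * ((colsel qs n p \<sigma> *\<^sub>v a) \<bullet> (colsel qs n p \<sigma> *\<^sub>v a))"
proof -
  note R = rayleigh[OF A qs orth sig inj a]
  have "\<mu> * (\<Sum>l<p. (a $ l)^2) = (\<Sum>l<p. (a $ l)^2 * \<mu>)" by (simp add: sum_distrib_left mult.commute)
  also have "\<dots> \<le> (\<Sum>l<p. (a $ l)^2 * ev (\<sigma> l))"
    by (rule sum_mono, insert ge, auto intro: mult_left_mono)
  finally show ?thesis unfolding R .
qed

lemma rayleigh_le:
  assumes A: "A \<in> carrier_mat n n"
    and qs: "\<forall>i<n. qs ! i \<in> carrier_vec n \<and> A *\<^sub>v qs ! i = ev i \<cdot>\<^sub>v qs ! i"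
    and orth: "\<forall>i<n. \<forall>j<n. qs ! i \<bullet> qs ! j = (if i = j then 1 else 0)"
    and sig: "\<forall>l<p. \<sigma> l < n" and inj: "inj_on \<sigma> {..<p}"
    and a: "a \<in> carrier_vec p" and le: "\<forall>l<p. ev (\<sigma> l) \<le> \<mu>"
  shows "(colsel qs n p \<sigma> *\<^sub>v a) \<bullet> (A *\<^sub>v (colsel qs n p \<sigma> *\<^sub>v a)) \<le> \<mu> * ((colsel qs n p \<sigma> *\<^sub>v a) \<bullet> (colsel qs n p \<sigma> *\<^sub>v a))"
proof -
  note R = rayleigh[OF A qs orth sig inj a]
  have "(\<Sum>l<p. (a $ l)^2 * ev (\<sigma> l)) \<le> (\<Sum>l<p. (a $ l)^2 * \<mu>)"
    by (rule sum_mono, insert le, auto intro: mult_left_mono)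
  also have "\<dots> = \<mu> * (\<Sum>l<p. (a $ l)^2)" by (simp add: sum_distrib_left mult.commute)
  finally show ?thesis unfolding R .
qed

lemma orth_comp:
  fixes Emb Q :: "real mat"
  assumes E: "Emb \<in> carrier_mat N m" and EE: "transpose_mat Emb * Emb = 1\<^sub>m m"
    and Q: "Q \<in> carrier_mat m p" and QQ: "transpose_mat Q * Q = 1\<^sub>m p"
  shows "transpose_mat (Emb * Q) * (Emb * Q) = 1\<^sub>m p"
proof -
  have "transpose_mat (Emb * Q) = transpose_mat Q * transpose_mat Emb"
    using E Q by (simp add: transpose_mult)
  hence "transpose_mat (Emb * Q) * (Emb * Q) = transpose_mat Q * transpose_mat Emb * (Emb * Q)" by simp
  also have "\<dots> = transpose_mat Q * (transpose_mat Emb * (Emb * Q))"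
    using E Q by (simp add: assoc_mult_mat[of _ p m _ N _ p])
  also have "transpose_mat Emb * (Emb * Q) = (transpose_mat Emb * Emb) * Q"
    using E Q by (simp add: assoc_mult_mat[of _ m N _ m _ p])
  also have "\<dots> = Q" unfolding EE using Q by simp
  finally show ?thesis using QQ by simp
qed

definition sym_spec :: "real mat \<Rightarrow> nat \<Rightarrow> real vec list \<Rightarrow> bool" where
  "sym_spec A n qs \<longleftrightarrow> length qs = n \<and> (\<forall>i<n. qs ! i \<in> carrier_vec n \<and> A *\<^sub>v qs ! i = eig A (Suc i) \<cdot>\<^sub>v qs ! i)
     \<and> (\<forall>i<n. \<forall>j<n. qs ! i \<bullet> qs ! j = (if i = j then 1 else 0))
     \<and> (\<forall>i j. i \<le> j \<longrightarrow> j < n \<longrightarrow> eig A (Suc i) \<le> eig A (Suc j))"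

lemma sym_spec_ex: "symm A n \<Longrightarrow> \<exists>qs. sym_spec A n qs"
  unfolding sym_spec_def by (rule spectral_eig)

lemma sym_specD:
  assumes "sym_spec A n qs"
  shows "\<forall>i<n. qs ! i \<in> carrier_vec n \<and> A *\<^sub>v qs ! i = eig A (Suc i) \<cdot>\<^sub>v qs ! i"
    "\<forall>i<n. qs ! i \<in> carrier_vec n"
    "\<forall>i<n. \<forall>j<n. qs ! i \<bullet> qs ! j = (if i = j then 1 else 0)"
    "\<And>i j. i \<le> j \<Longrightarrow> j < n \<Longrightarrow> eig A (Suc i) \<le> eig A (Suc j)"
  using assms unfolding sym_spec_def by auto

lemma U1:
  assumes SG: "symm G N" and SA: "symm Adj m"
    and E: "Emb \<in> carrier_mat N m" and EE: "transpose_mat Emb * Emb = 1\<^sub>m m"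
    and quadG: "\<And>y. y \<in> carrier_vec m \<Longrightarrow> (Emb *\<^sub>v y) \<bullet> (G *\<^sub>v (Emb *\<^sub>v y)) = 3 * (y \<bullet> y) - y \<bullet> (Adj *\<^sub>v y)"
    and mN: "m \<le> N" and j: "1 \<le> j" "j \<le> m"
  shows "eig G j \<le> 3 - eig Adj (m - j + 1)"
proof -
  have Adj: "Adj \<in> carrier_mat m m" using SA unfolding symm_def by auto
  obtain qs where sp: "sym_spec Adj m qs" using sym_spec_ex[OF SA] by blast
  note D = sym_specD[OF sp]
  define \<sigma> where "\<sigma> = (\<lambda>l. l + (m - j))"
  have sig: "\<forall>l<j. \<sigma> l < m" unfolding \<sigma>_def using j by auto
  have inj: "inj_on \<sigma> {..<j}" unfolding \<sigma>_def by (auto intro: inj_onI)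
  define Q where "Q = colsel qs m j \<sigma>"
  note cQ = colsel[OF D(2) D(3) sig inj, folded Q_def]
  define F where "F = Emb * Q"
  have F: "F \<in> carrier_mat N j" unfolding F_def using E cQ(1) by simp
  have FF: "transpose_mat F * F = 1\<^sub>m j" unfolding F_def by (rule orth_comp[OF E EE cQ(1) cQ(2)])
  show ?thesis
  proof (rule eig_upper[OF SG j(1) _ F one_carrier_mat[of N]])
    show "j \<le> N" using j mN by simp
    show "a = 0\<^sub>v j" if "a \<in> carrier_vec j" "F *\<^sub>v a = 0\<^sub>v N" for a using orth_inj[OF F FF that] .
    show "a = 0\<^sub>v N" if "(a :: real vec) \<in> carrier_vec N" "1\<^sub>m N *\<^sub>v a = 0\<^sub>v N" for a using one_mult_mat_vec[OF that(1)] that(2) by simp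
    show "N + j \<le> j + N" by simp
    fix a b assume a: "a \<in> carrier_vec j" and nz: "F *\<^sub>v a \<noteq> 0\<^sub>v N"
    define y where "y = Q *\<^sub>v a"
    have y: "y \<in> carrier_vec m" unfolding y_def using cQ(1) a by simp
    have Fa: "F *\<^sub>v a = Emb *\<^sub>v y" unfolding F_def y_def using E cQ(1) a by simp
    have ge: "y \<bullet> (Adj *\<^sub>v y) \<ge> eig Adj (m - j + 1) * (y \<bullet> y)" unfolding y_def Q_def
    proof (rule rayleigh_ge[OF Adj D(1) D(3) sig inj a])
      show "\<forall>l<j. eig Adj (m - j + 1) \<le> eig Adj (Suc (\<sigma> l))"
        using D(4) j unfolding \<sigma>_def by (auto intro!: D(4))
    qed
    have yy: "(Emb *\<^sub>v y) \<bullet> (Emb *\<^sub>v y) = y \<bullet> y" by (rule orth_scalar_gen[OF E EE y y])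
    show "(F *\<^sub>v a) \<bullet> (G *\<^sub>v (F *\<^sub>v a)) \<le> (3 - eig Adj (m - j + 1)) * ((F *\<^sub>v a) \<bullet> (F *\<^sub>v a))"
      unfolding Fa quadG[OF y] yy using ge by (simp add: algebra_simps)
  qed
qed

lemma L1:
  assumes SG: "symm G N" and SA: "symm Adj m"
    and E: "Emb \<in> carrier_mat N m" and EE: "transpose_mat Emb * Emb = 1\<^sub>m m"
    and quadG: "\<And>y. y \<in> carrier_vec m \<Longrightarrow> (Emb *\<^sub>v y) \<bullet> (G *\<^sub>v (Emb *\<^sub>v y)) = 3 * (y \<bullet> y) - y \<bullet> (Adj *\<^sub>v y)"
    and mN: "m \<le> N" and j: "1 \<le> j" "j \<le> m"
  shows "eig G (N - j + 1) \<ge> 3 - eig Adj j"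
proof -
  have Adj: "Adj \<in> carrier_mat m m" using SA unfolding symm_def by auto
  obtain qs where sp: "sym_spec Adj m qs" using sym_spec_ex[OF SA] by blast
  note D = sym_specD[OF sp]
  define \<sigma> where "\<sigma> = (\<lambda>l::nat. l)"
  have sig: "\<forall>l<j. \<sigma> l < m" unfolding \<sigma>_def using j by auto
  have inj: "inj_on \<sigma> {..<j}" unfolding \<sigma>_def by (auto intro: inj_onI)
  define Q where "Q = colsel qs m j \<sigma>"
  note cQ = colsel[OF D(2) D(3) sig inj, folded Q_def]
  define F where "F = Emb * Q"
  have F: "F \<in> carrier_mat N j" unfolding F_def using E cQ(1) by simp
  have FF: "transpose_mat F * F = 1\<^sub>m j" unfolding F_def by (rule orth_comp[OF E EE cQ(1) cQ(2)])
  show ?thesis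
  proof (rule eig_lower[OF SG _ _ F one_carrier_mat[of N]])
    show "1 \<le> N - j + 1" "N - j + 1 \<le> N" using j mN by auto
    show "a = 0\<^sub>v j" if "a \<in> carrier_vec j" "F *\<^sub>v a = 0\<^sub>v N" for a using orth_inj[OF F FF that] .
    show "a = 0\<^sub>v N" if "(a :: real vec) \<in> carrier_vec N" "1\<^sub>m N *\<^sub>v a = 0\<^sub>v N" for a using one_mult_mat_vec[OF that(1)] that(2) by simp
    show "2 * N < N - j + 1 + j + N" using j mN by simp
    fix a b assume a: "a \<in> carrier_vec j" and nz: "F *\<^sub>v a \<noteq> 0\<^sub>v N"
    define y where "y = Q *\<^sub>v a"
    have y: "y \<in> carrier_vec m" unfolding y_def using cQ(1) a by simp
    have Fa: "F *\<^sub>v a = Emb *\<^sub>v y" unfolding F_def y_def using E cQ(1) a by simp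
    have le: "y \<bullet> (Adj *\<^sub>v y) \<le> eig Adj j * (y \<bullet> y)" unfolding y_def Q_def
    proof (rule rayleigh_le[OF Adj D(1) D(3) sig inj a])
      have "eig Adj (Suc l) \<le> eig Adj (Suc (j - 1))" if "l < j" for l
        using that j by (intro D(4), auto)
      thus "\<forall>l<j. eig Adj (Suc (\<sigma> l)) \<le> eig Adj j" using j unfolding \<sigma>_def by auto
    qed
    have yy: "(Emb *\<^sub>v y) \<bullet> (Emb *\<^sub>v y) = y \<bullet> y" by (rule orth_scalar_gen[OF E EE y y])
    show "(F *\<^sub>v a) \<bullet> (G *\<^sub>v (F *\<^sub>v a)) \<ge> (3 - eig Adj j) * ((F *\<^sub>v a) \<bullet> (F *\<^sub>v a))"
      unfolding Fa quadG[OF y] yy using le by (simp add: algebra_simps)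
  qed
qed


definition units :: "nat \<Rightarrow> real vec list" where "units m = map (unit_vec m) [0..<m]"
definition selJ :: "nat set \<Rightarrow> nat \<Rightarrow> nat" where "selJ J l = sorted_list_of_set J ! l"

lemma units_sel:
  assumes J: "J \<subseteq> {..<m}"
  shows "colsel (units m) m (card J) (selJ J) \<in> carrier_mat m (card J)"
    "transpose_mat (colsel (units m) m (card J) (selJ J)) * colsel (units m) m (card J) (selJ J) = 1\<^sub>m (card J)"
    "\<And>b i. b \<in> carrier_vec (card J) \<Longrightarrow> i < m \<Longrightarrow> i \<notin> J \<Longrightarrow> (colsel (units m) m (card J) (selJ J) *\<^sub>v b) $ i = 0"
proof -
  have fin: "finite J" using J finite_subset by blast
  have uc: "\<forall>i<m. units m ! i \<in> carrier_vec m" unfolding units_def by auto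
  have uo: "\<forall>i<m. \<forall>j<m. units m ! i \<bullet> units m ! j = (if i = j then 1 else 0)"
    unfolding units_def by auto
  let ?xs = "sorted_list_of_set J"
  have len: "length ?xs = card J" by simp
  have dist: "distinct ?xs" by simp
  have setx: "set ?xs = J" using fin by simp
  have inJ: "selJ J l \<in> J" if "l < card J" for l unfolding selJ_def using that len setx nth_mem by metis
  have sig: "\<forall>l<card J. selJ J l < m" using inJ J by auto
  have inj: "inj_on (selJ J) {..<card J}" unfolding selJ_def
    by (rule inj_onI, insert dist len, auto simp: nth_eq_iff_index_eq)
  note c = colsel[OF uc uo sig inj]
  show "colsel (units m) m (card J) (selJ J) \<in> carrier_mat m (card J)" by (rule c(1))
  show "transpose_mat (colsel (units m) m (card J) (selJ J)) * colsel (units m) m (card J) (selJ J) = 1\<^sub>m (card J)" by (rule c(2))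
  fix b :: "real vec" and i assume b: "b \<in> carrier_vec (card J)" and i: "i < m" and iJ: "i \<notin> J"
  have "(colsel (units m) m (card J) (selJ J) *\<^sub>v b) $ i = (\<Sum>l<card J. (units m ! selJ J l) $ i * b $ l)"
    using i b c(1) by (auto simp: scalar_prod_def atLeast0LessThan colsel_def)
  also have "\<dots> = 0"
  proof (rule sum.neutral, rule ballI)
    fix l assume "l \<in> {..<card J}"
    hence l: "l < card J" by auto
    have "selJ J l \<noteq> i" using inJ[OF l] iJ by auto
    thus "(units m ! selJ J l) $ i * b $ l = 0" unfolding units_def using sig l i by simp
  qed
  finally show "(colsel (units m) m (card J) (selJ J) *\<^sub>v b) $ i = 0" .
qed

lemma diag_ge:
  fixes x :: "real vec"
  assumes x: "x \<in> carrier_vec m" and z: "\<forall>i<m. i \<notin> J \<longrightarrow> x $ i = 0" and d: "\<forall>i\<in>J. dg i \<ge> c"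
  shows "(\<Sum>l<m. dg l * (x $ l)^2) \<ge> c * (x \<bullet> x)"
proof -
  have "c * (x \<bullet> x) = (\<Sum>l<m. c * (x $ l)^2)" using x
    unfolding power2_eq_square by (auto simp: scalar_prod_def atLeast0LessThan sum_distrib_left)
  also have "\<dots> \<le> (\<Sum>l<m. dg l * (x $ l)^2)"
  proof (rule sum_mono)
    fix l assume "l \<in> {..<m}"
    thus "c * (x $ l)^2 \<le> dg l * (x $ l)^2" using z d by (cases "l \<in> J", auto intro: mult_right_mono)
  qed
  finally show ?thesis .
qed

lemma diag_le:
  fixes x :: "real vec"
  assumes x: "x \<in> carrier_vec m" and z: "\<forall>i<m. i \<notin> J \<longrightarrow> x $ i = 0" and d: "\<forall>i\<in>J. dg i \<le> c"
  shows "(\<Sum>l<m. dg l * (x $ l)^2) \<le> c * (x \<bullet> x)"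
proof -
  have "(\<Sum>l<m. dg l * (x $ l)^2) \<le> (\<Sum>l<m. c * (x $ l)^2)"
  proof (rule sum_mono)
    fix l assume "l \<in> {..<m}"
    thus "dg l * (x $ l)^2 \<le> c * (x $ l)^2" using z d by (cases "l \<in> J", auto intro: mult_right_mono)
  qed
  also have "\<dots> = c * (x \<bullet> x)" using x
    unfolding power2_eq_square by (auto simp: scalar_prod_def atLeast0LessThan sum_distrib_left)
  finally show ?thesis .
qed

lemma U2:
  assumes SA: "symm Adj m" and SL: "symm L m"
    and quadA: "\<And>y. y \<in> carrier_vec m \<Longrightarrow> y \<bullet> (Adj *\<^sub>v y) = (\<Sum>l<m. dg l * (y $ l)^2) - y \<bullet> (L *\<^sub>v y)"
    and it: "1 \<le> i" "i \<le> t" "t \<le> m"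
    and J: "J \<subseteq> {..<m}" and cJ: "m - t + i \<le> card J" and Jd: "\<forall>l\<in>J. dg l \<ge> 3 - \<delta>"
  shows "eig Adj (m - i + 1) \<ge> 3 - eig L t - \<delta>"
proof -
  have L: "L \<in> carrier_mat m m" using SL unfolding symm_def by auto
  obtain qs where sp: "sym_spec L m qs" using sym_spec_ex[OF SL] by blast
  note D = sym_specD[OF sp]
  define \<sigma> where "\<sigma> = (\<lambda>l::nat. l)"
  have sig: "\<forall>l<t. \<sigma> l < m" unfolding \<sigma>_def using it by auto
  have inj: "inj_on \<sigma> {..<t}" unfolding \<sigma>_def by (auto intro: inj_onI)
  define F where "F = colsel qs m t \<sigma>"
  note cF = colsel[OF D(2) D(3) sig inj, folded F_def]
  define H where "H = colsel (units m) m (card J) (selJ J)"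
  note cH = units_sel[OF J, folded H_def]
  show ?thesis
  proof (rule eig_lower[OF SA _ _ cF(1) cH(1)])
    show "1 \<le> m - i + 1" "m - i + 1 \<le> m" using it by auto
    show "a = 0\<^sub>v t" if "a \<in> carrier_vec t" "F *\<^sub>v a = 0\<^sub>v m" for a using orth_inj[OF cF(1) cF(2) that] .
    show "a = 0\<^sub>v (card J)" if "a \<in> carrier_vec (card J)" "H *\<^sub>v a = 0\<^sub>v m" for a using orth_inj[OF cH(1) cH(2) that] .
    show "2 * m < m - i + 1 + t + card J" using it cJ by simp
    fix a b assume a: "a \<in> carrier_vec t" and b: "b \<in> carrier_vec (card J)" and e: "F *\<^sub>v a = H *\<^sub>v b"
    define x where "x = F *\<^sub>v a"
    have x: "x \<in> carrier_vec m" unfolding x_def using cF(1) a by simp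
    have z: "\<forall>l<m. l \<notin> J \<longrightarrow> x $ l = 0" unfolding x_def e using cH(3)[OF b] by auto
    have dge: "(\<Sum>l<m. dg l * (x $ l)^2) \<ge> (3 - \<delta>) * (x \<bullet> x)" by (rule diag_ge[OF x z Jd])
    have le: "x \<bullet> (L *\<^sub>v x) \<le> eig L t * (x \<bullet> x)" unfolding x_def F_def
    proof (rule rayleigh_le[OF L D(1) D(3) sig inj a])
      have "eig L (Suc l) \<le> eig L (Suc (t - 1))" if "l < t" for l
        using that it by (intro D(4), auto)
      thus "\<forall>l<t. eig L (Suc (\<sigma> l)) \<le> eig L t" using it unfolding \<sigma>_def by auto
    qed
    show "(F *\<^sub>v a) \<bullet> (Adj *\<^sub>v (F *\<^sub>v a)) \<ge> (3 - eig L t - \<delta>) * ((F *\<^sub>v a) \<bullet> (F *\<^sub>v a))"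
      unfolding x_def[symmetric] quadA[OF x] using dge le by (simp add: algebra_simps)
  qed
qed

lemma L2:
  assumes SA: "symm Adj m" and SL: "symm L m"
    and quadA: "\<And>y. y \<in> carrier_vec m \<Longrightarrow> y \<bullet> (Adj *\<^sub>v y) = (\<Sum>l<m. dg l * (y $ l)^2) - y \<bullet> (L *\<^sub>v y)"
    and js: "1 \<le> j" "j \<le> s" "s \<le> m"
    and J: "J \<subseteq> {..<m}" and cJ: "m - s + j \<le> card J" and Jd: "\<forall>l\<in>J. dg l \<le> 3 - \<delta>"
  shows "eig Adj j \<le> 3 - eig L (m - s + 1) - \<delta>"
proof -
  have L: "L \<in> carrier_mat m m" using SL unfolding symm_def by auto
  obtain qs where sp: "sym_spec L m qs" using sym_spec_ex[OF SL] by blast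
  note D = sym_specD[OF sp]
  define \<sigma> where "\<sigma> = (\<lambda>l. l + (m - s))"
  have sig: "\<forall>l<s. \<sigma> l < m" unfolding \<sigma>_def using js by auto
  have inj: "inj_on \<sigma> {..<s}" unfolding \<sigma>_def by (auto intro: inj_onI)
  define F where "F = colsel qs m s \<sigma>"
  note cF = colsel[OF D(2) D(3) sig inj, folded F_def]
  define H where "H = colsel (units m) m (card J) (selJ J)"
  note cH = units_sel[OF J, folded H_def]
  show ?thesis
  proof (rule eig_upper[OF SA js(1) _ cF(1) cH(1)])
    show "j \<le> m" using js by auto
    show "a = 0\<^sub>v s" if "a \<in> carrier_vec s" "F *\<^sub>v a = 0\<^sub>v m" for a using orth_inj[OF cF(1) cF(2) that] .
    show "a = 0\<^sub>v (card J)" if "a \<in> carrier_vec (card J)" "H *\<^sub>v a = 0\<^sub>v m" for a using orth_inj[OF cH(1) cH(2) that] .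
    show "m + j \<le> s + card J" using js cJ by simp
    fix a b assume a: "a \<in> carrier_vec s" and b: "b \<in> carrier_vec (card J)" and e: "F *\<^sub>v a = H *\<^sub>v b"
    define x where "x = F *\<^sub>v a"
    have x: "x \<in> carrier_vec m" unfolding x_def using cF(1) a by simp
    have z: "\<forall>l<m. l \<notin> J \<longrightarrow> x $ l = 0" unfolding x_def e using cH(3)[OF b] by auto
    have dle: "(\<Sum>l<m. dg l * (x $ l)^2) \<le> (3 - \<delta>) * (x \<bullet> x)" by (rule diag_le[OF x z Jd])
    have ge: "x \<bullet> (L *\<^sub>v x) \<ge> eig L (m - s + 1) * (x \<bullet> x)" unfolding x_def F_def
    proof (rule rayleigh_ge[OF L D(1) D(3) sig inj a])
      show "\<forall>l<s. eig L (m - s + 1) \<le> eig L (Suc (\<sigma> l))"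
        using js unfolding \<sigma>_def by (auto intro!: D(4))
    qed
    show "(F *\<^sub>v a) \<bullet> (Adj *\<^sub>v (F *\<^sub>v a)) \<le> (3 - eig L (m - s + 1) - \<delta>) * ((F *\<^sub>v a) \<bullet> (F *\<^sub>v a))"
      unfolding x_def[symmetric] quadA[OF x] using dle ge by (simp add: algebra_simps)
  qed
qed

lemma ones_family:
  assumes n: "1 \<le> n"
  shows "mat n 1 (\<lambda>_. 1) \<in> carrier_mat n 1"
    "\<And>a. a \<in> carrier_vec 1 \<Longrightarrow> mat n 1 (\<lambda>_. 1) *\<^sub>v a = 0\<^sub>v n \<Longrightarrow> a = (0\<^sub>v 1 :: real vec)"
    "\<And>a. a \<in> carrier_vec 1 \<Longrightarrow> mat n 1 (\<lambda>_. 1) *\<^sub>v a = (a $ 0 :: real) \<cdot>\<^sub>v vec n (\<lambda>_. 1)"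
proof -
  show "mat n 1 (\<lambda>_. 1) \<in> carrier_mat n 1" by auto
  show *: "mat n 1 (\<lambda>_. 1) *\<^sub>v a = (a $ 0 :: real) \<cdot>\<^sub>v vec n (\<lambda>_. 1)" if "a \<in> carrier_vec 1" for a
    using that by (intro eq_vecI, auto simp: scalar_prod_def)
  fix a :: "real vec" assume a: "a \<in> carrier_vec 1" and z: "mat n 1 (\<lambda>_. 1) *\<^sub>v a = 0\<^sub>v n"
  have "(mat n 1 (\<lambda>_. 1) *\<^sub>v a) $ 0 = a $ 0" using *[OF a] n by simp
  moreover have "(mat n 1 (\<lambda>_. 1) *\<^sub>v a) $ 0 = 0" unfolding z using n by simp
  ultimately have "a $ 0 = 0" by simp
  thus "a = 0\<^sub>v 1" using a by (intro eq_vecI, auto)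
qed

lemma lap_min:
  assumes S: "symm A n" and n: "1 \<le> n" and z: "A *\<^sub>v vec n (\<lambda>_. 1) = 0\<^sub>v n"
  shows "eig A 1 \<le> 0"
proof -
  note O = ones_family[OF n]
  show ?thesis
  proof (rule eig_upper[OF S order_refl n O(1) one_carrier_mat[of n]])
    show "a = 0\<^sub>v 1" if "(a :: real vec) \<in> carrier_vec 1" "mat n 1 (\<lambda>_. 1) *\<^sub>v a = 0\<^sub>v n" for a using O(2)[OF that] .
    show "a = 0\<^sub>v n" if "(a :: real vec) \<in> carrier_vec n" "1\<^sub>m n *\<^sub>v a = 0\<^sub>v n" for a using one_mult_mat_vec[OF that(1)] that(2) by simp
    show "n + 1 \<le> 1 + n" by simp
    fix a b :: "real vec" assume a: "a \<in> carrier_vec 1"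
    have A: "A \<in> carrier_mat n n" using S unfolding symm_def by auto
    show "(mat n 1 (\<lambda>_. 1) *\<^sub>v a) \<bullet> (A *\<^sub>v (mat n 1 (\<lambda>_. 1) *\<^sub>v a)) \<le> 0 * ((mat n 1 (\<lambda>_. 1) *\<^sub>v a) \<bullet> (mat n 1 (\<lambda>_. 1) *\<^sub>v a))"
      unfolding O(3)[OF a] using mult_mat_vec[OF A, of "vec n (\<lambda>_. 1)" "a $ 0"] z by simp
  qed
qed

lemma lap_max:
  assumes S: "symm A n" and n: "1 \<le> n" and z: "A *\<^sub>v vec n (\<lambda>_. 1) = 0\<^sub>v n"
  shows "eig A n \<ge> 0"
proof -
  note O = ones_family[OF n]
  show ?thesis
  proof (rule eig_lower[OF S n order_refl O(1) one_carrier_mat[of n]])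
    show "a = 0\<^sub>v 1" if "(a :: real vec) \<in> carrier_vec 1" "mat n 1 (\<lambda>_. 1) *\<^sub>v a = 0\<^sub>v n" for a using O(2)[OF that] .
    show "a = 0\<^sub>v n" if "(a :: real vec) \<in> carrier_vec n" "1\<^sub>m n *\<^sub>v a = 0\<^sub>v n" for a using one_mult_mat_vec[OF that(1)] that(2) by simp
    show "2 * n < n + 1 + n" by simp
    fix a b :: "real vec" assume a: "a \<in> carrier_vec 1"
    have A: "A \<in> carrier_mat n n" using S unfolding symm_def by auto
    show "(mat n 1 (\<lambda>_. 1) *\<^sub>v a) \<bullet> (A *\<^sub>v (mat n 1 (\<lambda>_. 1) *\<^sub>v a)) \<ge> 0 * ((mat n 1 (\<lambda>_. 1) *\<^sub>v a) \<bullet> (mat n 1 (\<lambda>_. 1) *\<^sub>v a))"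
      unfolding O(3)[OF a] using mult_mat_vec[OF A, of "vec n (\<lambda>_. 1)" "a $ 0"] z by simp
  qed
qed


lemma vlist:
  assumes "finite S"
  shows "distinct (vlist S)" "set (vlist S) = S" "length (vlist S) = card S"
proof -
  have "\<exists>xs. distinct xs \<and> set xs = S" using finite_distinct_list[OF assms] by auto
  hence *: "distinct (vlist S) \<and> set (vlist S) = S" unfolding vlist_def by (rule someI_ex)
  thus "distinct (vlist S)" "set (vlist S) = S" by auto
  thus "length (vlist S) = card S" using distinct_card by metis
qed

lemma mat_mult_entry:
  assumes "A \<in> carrier_mat a b" "B \<in> carrier_mat b c" "i < a" "j < c"
  shows "(A * B) $$ (i,j) = (\<Sum>k<b. A $$ (i,k) * B $$ (k,j))"
  using assms by (auto simp: scalar_prod_def atLeast0LessThan)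

lemma sum_single:
  assumes d: "distinct vs" and i0: "i0 < length vs"
  shows "(\<Sum>i<length vs. (if vs ! i = vs ! i0 then g i else 0)) = (g i0 :: 'a :: comm_monoid_add)"
proof -
  have "(\<Sum>i<length vs. (if vs ! i = vs ! i0 then g i else 0)) = (\<Sum>i<length vs. (if i = i0 then g i else 0))"
    by (rule sum.cong[OF refl], insert d i0, auto simp: nth_eq_iff_index_eq)
  also have "\<dots> = g i0" using i0 by (simp add: sum.delta)
  finally show ?thesis .
qed

lemma emb_mat:
  assumes dT: "distinct vsT" and dS: "distinct vsS"
    and io: "\<forall>l<length vsS. \<iota> (vsS ! l) \<in> set vsT"
  shows "transpose_mat (mat (length vsT) (length vsS) (\<lambda>(i,l). if vsT ! i = \<iota> (vsS ! l) then 1 else 0))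
      * mat (length vsT) (length vsT) (\<lambda>(i,j). f (vsT ! i) (vsT ! j))
      * mat (length vsT) (length vsS) (\<lambda>(i,l). if vsT ! i = \<iota> (vsS ! l) then 1 else 0)
    = mat (length vsS) (length vsS) (\<lambda>(l,l'). (f (\<iota> (vsS ! l)) (\<iota> (vsS ! l')) :: real))"
  (is "transpose_mat ?E * ?M * ?E = ?R")
proof -
  let ?N = "length vsT" and ?m = "length vsS"
  have E: "?E \<in> carrier_mat ?N ?m" by simp
  have M: "?M \<in> carrier_mat ?N ?N" by simp
  have ET: "transpose_mat ?E \<in> carrier_mat ?m ?N" by simp
  have EM: "transpose_mat ?E * ?M \<in> carrier_mat ?m ?N" by (rule mult_carrier_mat[OF ET M])
  define idx where "idx = (\<lambda>l. SOME i. i < ?N \<and> vsT ! i = \<iota> (vsS ! l))"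
  have idx: "idx l < ?N \<and> vsT ! idx l = \<iota> (vsS ! l)" if "l < ?m" for l
  proof -
    have "\<exists>i. i < ?N \<and> vsT ! i = \<iota> (vsS ! l)" using io that by (metis in_set_conv_nth)
    thus ?thesis unfolding idx_def by (rule someI_ex)
  qed
  have e1: "(transpose_mat ?E * ?M) $$ (l,j) = f (\<iota> (vsS ! l)) (vsT ! j)" if l: "l < ?m" and j: "j < ?N" for l j
  proof -
    have "(transpose_mat ?E * ?M) $$ (l,j) = (\<Sum>i<?N. transpose_mat ?E $$ (l,i) * ?M $$ (i,j))"
      by (rule mat_mult_entry[OF ET M l j])
    also have "\<dots> = (\<Sum>i<?N. (if vsT ! i = \<iota> (vsS ! l) then f (vsT ! i) (vsT ! j) else 0))"
      by (rule sum.cong[OF refl], insert l j, auto)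
    also have "\<dots> = (\<Sum>i<?N. (if vsT ! i = vsT ! idx l then f (vsT ! i) (vsT ! j) else 0))"
      using idx[OF l] by simp
    also have "\<dots> = f (vsT ! idx l) (vsT ! j)"
      by (rule sum_single[OF dT], insert idx[OF l], auto)
    also have "\<dots> = f (\<iota> (vsS ! l)) (vsT ! j)" using idx[OF l] by simp
    finally show ?thesis .
  qed
  show ?thesis
  proof (rule eq_matI)
    fix l l' assume "l < dim_row ?R" "l' < dim_col ?R"
    hence l: "l < ?m" and l': "l' < ?m" by auto
    have "(transpose_mat ?E * ?M * ?E) $$ (l,l') = (\<Sum>j<?N. (transpose_mat ?E * ?M) $$ (l,j) * ?E $$ (j,l'))"
      by (rule mat_mult_entry[OF EM E l l'])
    also have "\<dots> = (\<Sum>j<?N. (if vsT ! j = \<iota> (vsS ! l') then f (\<iota> (vsS ! l)) (vsT ! j) else 0))"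
    proof (rule sum.cong[OF refl])
      fix j assume "j \<in> {..<?N}"
      hence j: "j < ?N" by simp
      show "(transpose_mat ?E * ?M) $$ (l,j) * ?E $$ (j,l') = (if vsT ! j = \<iota> (vsS ! l') then f (\<iota> (vsS ! l)) (vsT ! j) else 0)"
        unfolding e1[OF l j] using j l' by simp
    qed
    also have "\<dots> = (\<Sum>j<?N. (if vsT ! j = vsT ! idx l' then f (\<iota> (vsS ! l)) (vsT ! j) else 0))"
      using idx[OF l'] by simp
    also have "\<dots> = f (\<iota> (vsS ! l)) (vsT ! idx l')"
      by (rule sum_single[OF dT], insert idx[OF l'], auto)
    also have "\<dots> = ?R $$ (l,l')" using idx[OF l'] l l' by simp
    finally show "(transpose_mat ?E * ?M * ?E) $$ (l,l') = ?R $$ (l,l')" .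
  qed auto
qed

lemma diag_minus:
  fixes B :: "real mat"
  assumes B: "B \<in> carrier_mat m m" and y: "y \<in> carrier_vec m"
  shows "y \<bullet> (mat m m (\<lambda>(i,j). (if i = j then d i else 0) - B $$ (i,j)) *\<^sub>v y)
     = (\<Sum>l<m. d l * (y $ l)^2) - y \<bullet> (B *\<^sub>v y)"
proof -
  let ?M = "mat m m (\<lambda>(i,j). (if i = j then d i else 0) - B $$ (i,j))"
  have e: "(?M *\<^sub>v y) $ i = d i * y $ i - (B *\<^sub>v y) $ i" if i: "i < m" for i
  proof -
    have "(?M *\<^sub>v y) $ i = (\<Sum>j<m. ((if i = j then d i else 0) - B $$ (i,j)) * y $ j)"
      using i y by (auto simp: scalar_prod_def atLeast0LessThan)
    also have "\<dots> = (\<Sum>j<m. (if i = j then d i * y $ j else 0) - B $$ (i,j) * y $ j)"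
      by (rule sum.cong[OF refl], auto simp: left_diff_distrib)
    also have "\<dots> = (\<Sum>j<m. (if i = j then d i * y $ j else 0)) - (\<Sum>j<m. B $$ (i,j) * y $ j)"
      by (rule sum_subtractf)
    also have "\<dots> = d i * y $ i - (B *\<^sub>v y) $ i"
      using i y B by (auto simp: scalar_prod_def atLeast0LessThan sum.delta)
    finally show ?thesis .
  qed
  have "y \<bullet> (?M *\<^sub>v y) = (\<Sum>i<m. y $ i * (d i * y $ i - (B *\<^sub>v y) $ i))"
    using y e by (auto simp: scalar_prod_def atLeast0LessThan intro!: sum.cong)
  also have "\<dots> = (\<Sum>l<m. d l * (y $ l)^2) - (\<Sum>i<m. y $ i * (B *\<^sub>v y) $ i)"
    by (simp add: sum_subtractf[symmetric] right_diff_distrib power2_eq_square mult_ac)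
  also have "(\<Sum>i<m. y $ i * (B *\<^sub>v y) $ i) = y \<bullet> (B *\<^sub>v y)"
    using y B by (auto simp: scalar_prod_def atLeast0LessThan)
  finally show ?thesis .
qed

definition lapf :: "'v set \<Rightarrow> ('v \<Rightarrow> 'v \<Rightarrow> bool) \<Rightarrow> 'v \<Rightarrow> 'v \<Rightarrow> real" where
  "lapf S E u w = (if u = w then real (graph_degree S E u) else 0) - (if E u w then 1 else 0)"

lemma laplacian_f:
  assumes fin: "finite S"
  shows "laplacian_mat S E = mat (length (vlist S)) (length (vlist S)) (\<lambda>(i,j). lapf S E (vlist S ! i) (vlist S ! j))"
  using vlist[OF fin] unfolding laplacian_mat_def lapf_def Let_def
  by (intro eq_matI, auto simp: nth_eq_iff_index_eq)

lemma laplacian_adj: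
  shows "laplacian_mat S E = mat (length (vlist S)) (length (vlist S))
     (\<lambda>(i,j). (if i = j then real (graph_degree S E (vlist S ! i)) else 0) - adjacency_mat S E $$ (i,j))"
  unfolding laplacian_mat_def adjacency_mat_def Let_def by (intro eq_matI, auto)

lemma adj_carrier: "adjacency_mat S E \<in> carrier_mat (length (vlist S)) (length (vlist S))"
  unfolding adjacency_mat_def Let_def by auto

lemma lap_carrier: "laplacian_mat S E \<in> carrier_mat (length (vlist S)) (length (vlist S))"
  unfolding laplacian_mat_def Let_def by auto

lemma symm_adj:
  assumes "\<And>p q. E p q \<Longrightarrow> E q p"
  shows "symm (adjacency_mat S E) (length (vlist S))"
  unfolding symm_def adjacency_mat_def Let_def using assms by auto

lemma symm_lap:
  assumes "\<And>p q. E p q \<Longrightarrow> E q p"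
  shows "symm (laplacian_mat S E) (length (vlist S))"
  unfolding symm_def laplacian_mat_def Let_def using assms by auto

lemma quad_lap:
  assumes y: "y \<in> carrier_vec (length (vlist S))"
  shows "y \<bullet> (adjacency_mat S E *\<^sub>v y) = (\<Sum>l<length (vlist S). real (graph_degree S E (vlist S ! l)) * (y $ l)^2)
     - y \<bullet> (laplacian_mat S E *\<^sub>v y)"
  unfolding laplacian_adj[of S E] diag_minus[OF adj_carrier y] by simp

lemma diag_minus_entry:
  fixes B :: "real mat"
  assumes B: "B \<in> carrier_mat m m" and y: "y \<in> carrier_vec m" and i: "i < m"
  shows "(mat m m (\<lambda>(i,j). (if i = j then d i else 0) - B $$ (i,j)) *\<^sub>v y) $ i = d i * y $ i - (B *\<^sub>v y) $ i"
proof -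
  let ?M = "mat m m (\<lambda>(i,j). (if i = j then d i else 0) - B $$ (i,j))"
  have "(?M *\<^sub>v y) $ i = (\<Sum>j<m. ((if i = j then d i else 0) - B $$ (i,j)) * y $ j)"
    using i y by (auto simp: scalar_prod_def atLeast0LessThan)
  also have "\<dots> = (\<Sum>j<m. (if i = j then d i * y $ j else 0) - B $$ (i,j) * y $ j)"
    by (rule sum.cong[OF refl], auto simp: left_diff_distrib)
  also have "\<dots> = (\<Sum>j<m. (if i = j then d i * y $ j else 0)) - (\<Sum>j<m. B $$ (i,j) * y $ j)"
    by (rule sum_subtractf)
  also have "\<dots> = d i * y $ i - (B *\<^sub>v y) $ i"
    using i y B by (auto simp: scalar_prod_def atLeast0LessThan sum.delta)
  finally show ?thesis .
qed

lemma lap_ones: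
  assumes fin: "finite S" and cl: "\<And>p q. p \<in> S \<Longrightarrow> E p q \<Longrightarrow> q \<in> S"
  shows "laplacian_mat S E *\<^sub>v vec (length (vlist S)) (\<lambda>_. 1) = 0\<^sub>v (length (vlist S))"
proof (rule eq_vecI)
  let ?vs = "vlist S" let ?n = "length ?vs"
  note v = vlist[OF fin]
  fix i assume "i < dim_vec (0\<^sub>v ?n :: real vec)"
  hence i: "i < ?n" by simp
  let ?p = "?vs ! i"
  have pS: "?p \<in> S" using i v by auto
  have one: "vec ?n (\<lambda>_. 1) \<in> carrier_vec ?n" by simp
  have "(laplacian_mat S E *\<^sub>v vec ?n (\<lambda>_. 1)) $ i
     = real (graph_degree S E ?p) * 1 - (adjacency_mat S E *\<^sub>v vec ?n (\<lambda>_. 1)) $ i"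
    unfolding laplacian_adj[of S E] using diag_minus_entry[OF adj_carrier one i] i by simp
  also have "(adjacency_mat S E *\<^sub>v vec ?n (\<lambda>_. 1)) $ i = (\<Sum>j<?n. (if E ?p (?vs ! j) then 1 else 0))"
    using i unfolding adjacency_mat_def Let_def by (simp add: scalar_prod_def atLeast0LessThan)
  also have "\<dots> = real (card {j. j < ?n \<and> E ?p (?vs ! j)})"
  proof -
    have "(\<Sum>j<?n. (if E ?p (?vs ! j) then 1 else 0 :: real)) = (\<Sum>j\<in>{j. j < ?n \<and> E ?p (?vs ! j)}. 1)"
      by (rule sum.mono_neutral_cong_right, auto)
    thus ?thesis by simp
  qed
  also have "card {j. j < ?n \<and> E ?p (?vs ! j)} = graph_degree S E ?p"
  proof -
    have inj: "inj_on (\<lambda>j. ?vs ! j) {j. j < ?n \<and> E ?p (?vs ! j)}"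
      using v(1) by (intro inj_onI, simp add: nth_eq_iff_index_eq)
    have img: "(\<lambda>j. ?vs ! j) ` {j. j < ?n \<and> E ?p (?vs ! j)} = {q \<in> S. E ?p q}"
    proof
      show "(\<lambda>j. ?vs ! j) ` {j. j < ?n \<and> E ?p (?vs ! j)} \<subseteq> {q \<in> S. E ?p q}"
        using v(2) by force
      show "{q \<in> S. E ?p q} \<subseteq> (\<lambda>j. ?vs ! j) ` {j. j < ?n \<and> E ?p (?vs ! j)}"
      proof
        fix q assume q: "q \<in> {q \<in> S. E ?p q}"
        hence "q \<in> set ?vs" using v by auto
        then obtain j where j: "j < ?n" "?vs ! j = q" by (metis in_set_conv_nth)
        thus "q \<in> (\<lambda>j. ?vs ! j) ` {j. j < ?n \<and> E ?p (?vs ! j)}" using q by force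
      qed
    qed
    show ?thesis unfolding graph_degree_def img[symmetric] card_image[OF inj] ..
  qed
  finally show "(laplacian_mat S E *\<^sub>v vec ?n (\<lambda>_. 1)) $ i = 0\<^sub>v ?n $ i" using i by simp
qed (simp add: laplacian_mat_def Let_def)


lemma tri_verts_Suc:
  "tri_verts (Suc k) = tri_verts k \<union> {Up a b | a b. a + b = k} \<union> {Dn a b | a b. a + b + 1 = k}"
  unfolding tri_verts_def by auto

lemma finite_tri_verts: "finite (tri_verts k)"
proof -
  have "tri_verts k \<subseteq> (\<lambda>(a,b). Up a b) ` ({..<k} \<times> {..<k}) \<union> (\<lambda>(a,b). Dn a b) ` ({..<k} \<times> {..<k})"
    unfolding tri_verts_def by force
  thus ?thesis by (rule finite_subset, auto)
qed

lemma card_tri_verts: "card (tri_verts k) = k^2"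
proof (induct k)
  case 0
  have "tri_verts 0 = {}" unfolding tri_verts_def by auto
  thus ?case by simp
next
  case (Suc k)
  let ?U = "{Up a b | a b. a + b = k}" and ?D = "{Dn a b | a b. a + b + 1 = k}"
  have U: "?U = (\<lambda>a. Up a (k - a)) ` {..k}" by force
  have cU: "card ?U = k + 1" unfolding U by (subst card_image, auto intro: inj_onI)
  have D: "?D = (\<lambda>a. Dn a (k - 1 - a)) ` {..<k}" by force
  have cD: "card ?D = k" unfolding D by (subst card_image, auto intro: inj_onI)
  have d1: "tri_verts k \<inter> ?U = {}" unfolding tri_verts_def by auto
  have d2: "(tri_verts k \<union> ?U) \<inter> ?D = {}" unfolding tri_verts_def by auto
  have fU: "finite ?U" unfolding U by simp
  have fD: "finite ?D" unfolding D by simp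
  have "card (tri_verts (Suc k)) = card (tri_verts k \<union> ?U) + card ?D"
    unfolding tri_verts_Suc by (rule card_Un_disjoint[OF _ fD d2], insert finite_tri_verts fU, auto)
  also have "card (tri_verts k \<union> ?U) = card (tri_verts k) + card ?U"
    by (rule card_Un_disjoint[OF finite_tri_verts fU d1])
  finally show ?case unfolding Suc cU cD by (simp add: power2_eq_square)
qed

abbreviation cd :: "nat \<Rightarrow> tri \<Rightarrow> nat" where
  "cd k a \<equiv> graph_degree (tri_verts k) (cluster_adj k) a"

lemma card3: "card {d. d < (3::nat) \<and> P d} = of_bool (P 0) + of_bool (P 1) + of_bool (P 2)"
proof -
  have "{d. d < (3::nat) \<and> P d} = {d \<in> {..<3}. P d}" by auto
  hence "card {d. d < (3::nat) \<and> P d} = (\<Sum>d\<in>{d \<in> {..<3}. P d}. 1)" by simp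
  also have "\<dots> = (\<Sum>d<3. if P d then 1 else 0)" by (rule sum.inter_filter, simp)
  also have "\<dots> = of_bool (P 0) + of_bool (P 1) + of_bool (P 2)"
    by (simp add: numeral_3_eq_3 numeral_2_eq_2)
  finally show ?thesis .
qed

lemma card_dir:
  assumes inj: "inj_on g {d. d < (3::nat) \<and> P d}" and eq: "X = g ` {d. d < 3 \<and> P d}"
  shows "card X = of_bool (P 0) + of_bool (P 1) + of_bool (P 2)"
  unfolding eq card_image[OF inj] card3 ..

lemma cd_up:
  assumes xy: "x + y < k"
  shows "cd k (Up x y) = of_bool (x + y + 1 < k) + of_bool (1 \<le> x) + of_bool (1 \<le> y)"
proof -
  define g where "g = (\<lambda>d::nat. if d = 0 then Dn x y else if d = 1 then Dn (x - 1) y else Dn x (y - 1))"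
  define P where "P = (\<lambda>d::nat. if d = 0 then x + y + 1 < k else if d = 1 then 1 \<le> x else 1 \<le> y)"
  have "cd k (Up x y) = of_bool (P 0) + of_bool (P 1) + of_bool (P 2)"
    unfolding graph_degree_def
  proof (rule card_dir)
    show "inj_on g {d. d < 3 \<and> P d}" unfolding g_def P_def
      by (rule inj_onI, auto simp: numeral_3_eq_3 less_Suc_eq)
    show "{q \<in> tri_verts k. cluster_adj k (Up x y) q} = g ` {d. d < 3 \<and> P d}"
    proof
      show "{q \<in> tri_verts k. cluster_adj k (Up x y) q} \<subseteq> g ` {d. d < 3 \<and> P d}"
      proof
        fix q assume q: "q \<in> {q \<in> tri_verts k. cluster_adj k (Up x y) q}"
        then obtain c e where qd: "q = Dn c e" and ce: "c + e + 1 < k"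
          unfolding cluster_adj_def tri_verts_def by (cases q, auto)
        have sh: "(c = x \<and> e = y) \<or> (c + 1 = x \<and> e = y) \<or> (c = x \<and> e + 1 = y)"
          using q qd unfolding cluster_adj_def by auto
        show "q \<in> g ` {d. d < 3 \<and> P d}"
        proof (cases "c = x \<and> e = y")
          case True thus ?thesis using qd ce unfolding g_def P_def by (intro image_eqI[of _ _ 0], auto)
        next
          case F1: False
          show ?thesis
          proof (cases "c + 1 = x \<and> e = y")
            case True thus ?thesis using qd ce unfolding g_def P_def by (intro image_eqI[of _ _ 1], auto)
          next
            case False
            hence "c = x \<and> e + 1 = y" using sh F1 by auto
            thus ?thesis using qd ce unfolding g_def P_def by (intro image_eqI[of _ _ 2], auto)
          qed
        qed
      qed
      show "g ` {d. d < 3 \<and> P d} \<subseteq> {q \<in> tri_verts k. cluster_adj k (Up x y) q}"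
      proof
        fix q assume "q \<in> g ` {d. d < 3 \<and> P d}"
        then obtain d where d: "d < 3" "P d" and q: "q = g d" by auto
        have "d = 0 \<or> d = 1 \<or> d = 2" using d by auto
        thus "q \<in> {q \<in> tri_verts k. cluster_adj k (Up x y) q}"
          using d q xy unfolding g_def P_def cluster_adj_def tri_verts_def by auto
      qed
    qed
  qed
  thus ?thesis unfolding P_def by simp
qed

lemma cd_dn:
  assumes xy: "x + y + 1 < k"
  shows "cd k (Dn x y) = 3"
proof -
  define g where "g = (\<lambda>d::nat. if d = 0 then Up x y else if d = 1 then Up (x + 1) y else Up x (y + 1))"
  have "cd k (Dn x y) = of_bool True + of_bool True + of_bool True"
    unfolding graph_degree_def
  proof (rule card_dir[where P = "\<lambda>_. True"])
    show "inj_on g {d. d < 3 \<and> True}" unfolding g_def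
      by (rule inj_onI, auto simp: numeral_3_eq_3 less_Suc_eq)
    show "{q \<in> tri_verts k. cluster_adj k (Dn x y) q} = g ` {d. d < 3 \<and> True}"
    proof
      show "{q \<in> tri_verts k. cluster_adj k (Dn x y) q} \<subseteq> g ` {d. d < 3 \<and> True}"
      proof
        fix q assume q: "q \<in> {q \<in> tri_verts k. cluster_adj k (Dn x y) q}"
        then obtain c e where qd: "q = Up c e"
          unfolding cluster_adj_def tri_verts_def by (cases q, auto)
        have sh: "(x = c \<and> y = e) \<or> (x + 1 = c \<and> y = e) \<or> (x = c \<and> y + 1 = e)"
          using q qd unfolding cluster_adj_def by auto
        show "q \<in> g ` {d. d < 3 \<and> True}"
        proof (cases "x = c \<and> y = e")
          case True thus ?thesis using qd unfolding g_def by (intro image_eqI[of _ _ 0], auto)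
        next
          case F1: False
          show ?thesis
          proof (cases "x + 1 = c \<and> y = e")
            case True thus ?thesis using qd unfolding g_def by (intro image_eqI[of _ _ 1], auto)
          next
            case False
            hence "x = c \<and> y + 1 = e" using sh F1 by auto
            thus ?thesis using qd unfolding g_def by (intro image_eqI[of _ _ 2], auto)
          qed
        qed
      qed
      show "g ` {d. d < 3 \<and> True} \<subseteq> {q \<in> tri_verts k. cluster_adj k (Dn x y) q}"
      proof
        fix q assume "q \<in> g ` {d. d < 3 \<and> True}"
        then obtain d where d: "d < 3" and q: "q = g d" by auto
        have "d = 0 \<or> d = 1 \<or> d = 2" using d by auto
        thus "q \<in> {q \<in> tri_verts k. cluster_adj k (Dn x y) q}"
          using d q xy unfolding g_def cluster_adj_def tri_verts_def by auto
      qed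
    qed
  qed
  thus ?thesis by simp
qed

definition sides :: "nat \<Rightarrow> tri \<Rightarrow> nat set" where
  "sides k a = {i. i < 3 \<and> (\<exists>t<k. a = side_tri k i t)}"

lemma sides_up:
  assumes xy: "x + y < k"
  shows "card (sides k (Up x y)) = of_bool (y = 0) + of_bool (x + y + 1 = k) + of_bool (x = 0)"
proof -
  define Q where "Q = (\<lambda>d::nat. if d = 0 then y = 0 else if d = 1 then x + y + 1 = k else x = 0)"
  have "sides k (Up x y) = {d. d < 3 \<and> Q d}"
  proof -
    have "(\<exists>t<k. Up x y = side_tri k d t) = Q d" if "d < 3" for d
    proof -
      have "d = 0 \<or> d = 1 \<or> d = 2" using that by auto
      moreover have "(\<exists>t<k. Up x y = side_tri k 0 t) = Q 0" using xy unfolding side_tri_def Q_def by auto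
      moreover have "(\<exists>t<k. Up x y = side_tri k 1 t) = Q 1"
      proof
        assume "\<exists>t<k. Up x y = side_tri k 1 t"
        then obtain t where "t < k" "Up x y = side_tri k 1 t" by auto
        thus "Q 1" unfolding side_tri_def Q_def by auto
      next
        assume "Q 1"
        hence "y < k \<and> Up x y = side_tri k 1 y" unfolding side_tri_def Q_def by auto
        thus "\<exists>t<k. Up x y = side_tri k 1 t" by blast
      qed
      moreover have "(\<exists>t<k. Up x y = side_tri k 2 t) = Q 2"
      proof
        assume "\<exists>t<k. Up x y = side_tri k 2 t"
        then obtain t where "t < k" "Up x y = side_tri k 2 t" by auto
        thus "Q 2" unfolding side_tri_def Q_def by auto
      next
        assume "Q 2"
        hence "k - 1 - y < k \<and> Up x y = side_tri k 2 (k - 1 - y)" using xy unfolding side_tri_def Q_def by auto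
        thus "\<exists>t<k. Up x y = side_tri k 2 t" by blast
      qed
      ultimately show ?thesis by auto
    qed
    thus ?thesis unfolding sides_def by auto
  qed
  thus ?thesis using card3[of Q] unfolding Q_def by simp
qed

lemma sides_dn: "sides k (Dn x y) = {}"
  unfolding sides_def side_tri_def by auto

lemma cd_plus_sides:
  assumes a: "a \<in> tri_verts k"
  shows "cd k a + card (sides k a) = 3"
proof (cases a)
  case (Up x y)
  hence xy: "x + y < k" using a unfolding tri_verts_def by auto
  show ?thesis unfolding Up cd_up[OF xy] sides_up[OF xy] using xy
    by (cases "x = 0"; cases "y = 0"; cases "x + y + 1 = k", auto)
next
  case (Dn x y)
  hence xy: "x + y + 1 < k" using a unfolding tri_verts_def by auto
  show ?thesis unfolding Dn cd_dn[OF xy] sides_dn by simp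
qed

lemma cd_le3: "a \<in> tri_verts k \<Longrightarrow> cd k a \<le> 3"
  using cd_plus_sides by fastforce


definition hb :: "nat \<Rightarrow> nat \<Rightarrow> tri" where
  "hb k t = (if t < k - 1 then Up t 0 else if t < 2 * (k - 1) then Up (k - 1 - (t - (k - 1))) (t - (k - 1))
     else Up 0 (k - 1 - (t - 2 * (k - 1))))"

lemma hb_inj: "inj_on (hb k) {..<3 * (k - 1)}"
proof (rule inj_onI)
  fix t t' assume t: "t \<in> {..<3 * (k - 1)}" and t': "t' \<in> {..<3 * (k - 1)}" and e: "hb k t = hb k t'"
  show "t = t'"
    using t t' e unfolding hb_def by (auto split: if_splits)
qed

lemma hb_side:
  assumes t: "t < 3 * (k - 1)"
  shows "\<exists>i<3. \<exists>s<k. hb k t = side_tri k i s"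
proof (cases "t < k - 1")
  case True
  thus ?thesis unfolding hb_def side_tri_def by (intro exI[of _ 0], auto)
next
  case F: False
  show ?thesis
  proof (cases "t < 2 * (k - 1)")
    case True
    thus ?thesis using F unfolding hb_def side_tri_def by (intro exI[of _ 1], auto)
  next
    case False
    hence "hb k t = side_tri k 2 (t - 2 * (k - 1))" "t - 2 * (k - 1) < k" using F t unfolding hb_def side_tri_def by auto
    thus ?thesis by (intro exI[of _ 2], auto)
  qed
qed

lemma side_tri_in: "i < 3 \<Longrightarrow> t < k \<Longrightarrow> side_tri k i t \<in> tri_verts k"
  unfolding side_tri_def tri_verts_def by auto

lemma hb_in: "t < 3 * (k - 1) \<Longrightarrow> hb k t \<in> tri_verts k"
proof -
  assume "t < 3 * (k - 1)"
  then obtain i s where "i < 3" "s < k" "hb k t = side_tri k i s" using hb_side by blast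
  thus ?thesis using side_tri_in by simp
qed

lemma cd_side:
  assumes i: "i < 3" and t: "t < k"
  shows "cd k (side_tri k i t) \<le> 2"
proof -
  have "i \<in> sides k (side_tri k i t)" unfolding sides_def using i t by auto
  moreover have "finite (sides k (side_tri k i t))" unfolding sides_def by auto
  ultimately have "card (sides k (side_tri k i t)) \<ge> 1"
    by (metis One_nat_def Suc_leI card_gt_0_iff empty_iff)
  thus ?thesis using cd_plus_sides[OF side_tri_in[OF i t]] by simp
qed

lemma cd_hb: "t < 3 * (k - 1) \<Longrightarrow> cd k (hb k t) \<le> 2"
proof -
  assume "t < 3 * (k - 1)"
  then obtain i s where "i < 3" "s < k" "hb k t = side_tri k i s" using hb_side by blast
  thus ?thesis using cd_side by simp
qed

lemma side_in_hb:
  assumes k: "2 \<le> k" and i: "i < 3" and t: "t < k"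
  shows "side_tri k i t \<in> hb k ` {..<3 * (k - 1)}"
proof -
  have "i = 0 \<or> i = 1 \<or> i = 2" using i by arith
  moreover
  { assume i0: "i = 0"
    have ?thesis
    proof (cases "t < k - 1")
      case True thus ?thesis using i0 k unfolding side_tri_def by (intro image_eqI[of _ _ t], auto simp: hb_def)
    next
      case False hence "t = k - 1" using t by auto
      thus ?thesis using i0 k unfolding side_tri_def by (intro image_eqI[of _ _ "k - 1"], auto simp: hb_def)
    qed }
  moreover
  { assume i1: "i = 1"
    have ?thesis
    proof (cases "t < k - 1")
      case True thus ?thesis using i1 k unfolding side_tri_def by (intro image_eqI[of _ _ "k - 1 + t"], auto simp: hb_def)
    next
      case False hence "t = k - 1" using t by auto
      thus ?thesis using i1 k unfolding side_tri_def by (intro image_eqI[of _ _ "2 * (k - 1)"], auto simp: hb_def)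
    qed }
  moreover
  { assume i2: "i = 2"
    have ?thesis
    proof (cases "t < k - 1")
      case True thus ?thesis using i2 k unfolding side_tri_def by (intro image_eqI[of _ _ "2 * (k - 1) + t"], auto simp: hb_def)
    next
      case False hence "t = k - 1" using t by auto
      thus ?thesis using i2 k unfolding side_tri_def by (intro image_eqI[of _ _ 0], auto simp: hb_def)
    qed }
  ultimately show ?thesis by blast
qed

lemma low_in_hb:
  assumes k: "2 \<le> k" and a: "a \<in> tri_verts k" and c: "cd k a < 3"
  shows "a \<in> hb k ` {..<3 * (k - 1)}"
proof -
  have "card (sides k a) \<noteq> 0" using cd_plus_sides[OF a] c by auto
  hence "sides k a \<noteq> {}" by auto
  then obtain i t where "i < 3" "t < k" "a = side_tri k i t" unfolding sides_def by auto
  thus ?thesis using side_in_hb[OF k] by auto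
qed

lemma card_low: "2 \<le> k \<Longrightarrow> card {a \<in> tri_verts k. cd k a < 3} \<le> 3 * (k - 1)"
proof -
  assume k: "2 \<le> k"
  have sub: "{a \<in> tri_verts k. cd k a < 3} \<subseteq> hb k ` {..<3 * (k - 1)}" using low_in_hb[OF k] by auto
  have "card {a \<in> tri_verts k. cd k a < 3} \<le> card (hb k ` {..<3 * (k - 1)})"
    by (rule card_mono[OF _ sub], simp)
  also have "\<dots> \<le> card {..<3 * (k - 1)}" by (rule card_image_le, simp)
  finally show ?thesis by simp
qed

lemma card_le2: "card {a \<in> tri_verts k. cd k a \<le> 2} \<ge> 3 * (k - 1)"
proof -
  have "card (hb k ` {..<3 * (k - 1)}) = 3 * (k - 1)" by (subst card_image[OF hb_inj], simp)
  moreover have "hb k ` {..<3 * (k - 1)} \<subseteq> {a \<in> tri_verts k. cd k a \<le> 2}" using hb_in cd_hb by auto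
  moreover have "finite {a \<in> tri_verts k. cd k a \<le> 2}" using finite_tri_verts by auto
  ultimately show ?thesis by (metis card_mono)
qed

lemma card_split: "finite S \<Longrightarrow> card S = card {a \<in> S. P a} + card {a \<in> S. \<not> P a}"
  by (subst card_Un_disjoint[symmetric], auto intro: arg_cong[of _ _ card])

lemma card_eq3: "2 \<le> k \<Longrightarrow> card {a \<in> tri_verts k. cd k a \<ge> 3} \<ge> k^2 - 3 * (k - 1)"
proof -
  assume k: "2 \<le> k"
  have "k^2 = card {a \<in> tri_verts k. cd k a \<ge> 3} + card {a \<in> tri_verts k. \<not> cd k a \<ge> 3}"
    using card_split[OF finite_tri_verts] card_tri_verts by metis
  moreover have "{a \<in> tri_verts k. \<not> cd k a \<ge> 3} = {a \<in> tri_verts k. cd k a < 3}" by auto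
  ultimately show ?thesis using card_low[OF k] by simp
qed

lemma low1_sub:
  assumes k: "2 \<le> k"
  shows "{a \<in> tri_verts k. cd k a \<le> 1} \<subseteq> {Up 0 0, Up (k - 1) 0, Up 0 (k - 1)}"
proof
  fix a assume a: "a \<in> {a \<in> tri_verts k. cd k a \<le> 1}"
  show "a \<in> {Up 0 0, Up (k - 1) 0, Up 0 (k - 1)}"
  proof (cases a)
    case (Up x y)
    hence xy: "x + y < k" using a unfolding tri_verts_def by auto
    have "of_bool (x + y + 1 < k) + of_bool (1 \<le> x) + of_bool (1 \<le> y) \<le> (1::nat)"
      using a cd_up[OF xy] Up by auto
    thus ?thesis using Up xy k by (cases "x = 0"; cases "y = 0", auto)
  next
    case (Dn x y)
    hence "x + y + 1 < k" using a unfolding tri_verts_def by auto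
    thus ?thesis using a cd_dn Dn by auto
  qed
qed

lemma card_ge2: "2 \<le> k \<Longrightarrow> card {a \<in> tri_verts k. cd k a \<ge> 2} \<ge> k^2 - 3"
proof -
  assume k: "2 \<le> k"
  have "card {a \<in> tri_verts k. cd k a \<le> 1} \<le> card {Up 0 0, Up (k - 1) 0, Up 0 (k - 1)}"
    by (rule card_mono[OF _ low1_sub[OF k]], simp)
  also have "\<dots> \<le> 3" by (rule order.trans[OF card_insert_le_m1], auto simp: card_insert_le_m1)
  finally have l: "card {a \<in> tri_verts k. cd k a \<le> 1} \<le> 3" .
  have "k^2 = card {a \<in> tri_verts k. cd k a \<ge> 2} + card {a \<in> tri_verts k. \<not> cd k a \<ge> 2}"
    using card_split[OF finite_tri_verts] card_tri_verts by metis
  moreover have "{a \<in> tri_verts k. \<not> cd k a \<ge> 2} = {a \<in> tri_verts k. cd k a \<le> 1}" by auto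
  ultimately show ?thesis using l by simp
qed

lemma card_le1: "2 \<le> k \<Longrightarrow> card {a \<in> tri_verts k. cd k a \<le> 1} \<ge> 3"
proof -
  assume k: "2 \<le> k"
  have sub: "{Up 0 0, Up (k - 1) 0, Up 0 (k - 1)} \<subseteq> {a \<in> tri_verts k. cd k a \<le> 1}"
  proof -
    have "Up 0 0 \<in> tri_verts k" "Up (k - 1) 0 \<in> tri_verts k" "Up 0 (k - 1) \<in> tri_verts k"
      using k unfolding tri_verts_def by auto
    moreover have "cd k (Up 0 0) \<le> 1" using cd_up[of 0 0 k] k by simp
    moreover have "cd k (Up (k - 1) 0) \<le> 1" using cd_up[of "k - 1" 0 k] k by simp
    moreover have "cd k (Up 0 (k - 1)) \<le> 1" using cd_up[of 0 "k - 1" k] k by simp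
    ultimately show ?thesis by auto
  qed
  have "card {Up 0 0, Up (k - 1) 0, Up 0 (k - 1)} = 3" using k by auto
  moreover have "finite {a \<in> tri_verts k. cd k a \<le> 1}" using finite_tri_verts by auto
  ultimately show ?thesis using card_mono[OF _ sub] by metis
qed

lemma cd_ge1: "2 \<le> k \<Longrightarrow> a \<in> tri_verts k \<Longrightarrow> cd k a \<ge> 1"
proof -
  assume k: "2 \<le> k" and a: "a \<in> tri_verts k"
  show "cd k a \<ge> 1"
  proof (cases a)
    case (Up x y)
    hence xy: "x + y < k" using a unfolding tri_verts_def by auto
    thus ?thesis using cd_up[OF xy] Up k by (cases "x = 0"; cases "y = 0", auto)
  next
    case (Dn x y)
    hence "x + y + 1 < k" using a unfolding tri_verts_def by auto
    thus ?thesis using cd_dn Dn by auto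
  qed
qed


lemma three_set: "{0, 1, 2} = {i::nat. i < 3}"
  by auto

lemma side_tri_inj: "i < 3 \<Longrightarrow> t < k \<Longrightarrow> t' < k \<Longrightarrow> side_tri k i t = side_tri k i t' \<Longrightarrow> t = t'"
  unfolding side_tri_def by (auto split: if_splits)

lemma side_tri_in': "i < 3 \<Longrightarrow> t < k \<Longrightarrow> side_tri k i t \<in> tri_verts k"
  unfolding side_tri_def tri_verts_def by auto

context
  fixes V :: "'v set" and E :: "'v \<Rightarrow> 'v \<Rightarrow> bool" and nb :: "'v \<Rightarrow> nat \<Rightarrow> 'v" and k :: nat
  assumes sg: "simple_graph V E" and ori: "orientation V E nb" and k: "k \<ge> 1"
begin

lemma E_sym: "E p q \<Longrightarrow> E q p" using sg unfolding simple_graph_def by auto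
lemma E_irr: "\<not> E p p" using sg unfolding simple_graph_def by auto
lemma E_in: "E p q \<Longrightarrow> p \<in> V \<and> q \<in> V" using sg unfolding simple_graph_def by auto
lemma finV: "finite V" using sg unfolding simple_graph_def by auto

lemma nb_bij: "p \<in> V \<Longrightarrow> bij_betw (nb p) {i. i < 3} {q \<in> V. E p q}"
  using ori unfolding orientation_def three_set by auto

lemma nb_nb: "p \<in> V \<Longrightarrow> i < 3 \<Longrightarrow> nb p i \<in> V \<and> E p (nb p i)"
  using nb_bij[of p] unfolding bij_betw_def by auto

lemma nb_back: assumes p: "p \<in> V" and i: "i < 3"
  shows "\<exists>!j. j < 3 \<and> nb (nb p i) j = p"
proof -
  let ?q = "nb p i"
  have q: "?q \<in> V" "E ?q p" using nb_nb[OF p i] E_sym by auto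
  have "p \<in> nb ?q ` {j. j < 3}" using nb_bij[OF q(1)] q p unfolding bij_betw_def by auto
  then obtain j where j: "j < 3" "nb ?q j = p" by auto
  moreover have "j' = j" if "j' < 3" "nb ?q j' = p" for j'
    using nb_bij[OF q(1)] that j unfolding bij_betw_def inj_on_def by auto
  ultimately show ?thesis by blast
qed

lemma finT: "finite (gc_verts V k)"
  unfolding gc_verts_def using finV finite_tri_verts by auto

lemma gc_sym: "gc_adj V E nb k u w \<Longrightarrow> gc_adj V E nb k w u"
proof -
  assume a: "gc_adj V E nb k u w"
  show "gc_adj V E nb k w u"
  proof (cases "fst u = fst w \<and> cluster_adj k (snd u) (snd w)")
    case True
    hence "cluster_adj k (snd w) (snd u)" unfolding cluster_adj_def
      by (cases "snd u"; cases "snd w", auto)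
    thus ?thesis using a True unfolding gc_adj_def by auto
  next
    case False
    then obtain i j t where ijt: "i < 3" "j < 3" "t < k" "E (fst u) (fst w)" "nb (fst u) i = fst w"
      "nb (fst w) j = fst u" "snd u = side_tri k i t" "snd w = side_tri k j (k - 1 - t)"
      using a unfolding gc_adj_def by blast
    have "\<exists>i'<3. \<exists>j'<3. \<exists>t'<k. E (fst w) (fst u) \<and> nb (fst w) i' = fst u \<and> nb (fst u) j' = fst w
          \<and> snd w = side_tri k i' t' \<and> snd u = side_tri k j' (k - 1 - t')"
    proof -
      have "j < 3 \<and> i < 3 \<and> k - 1 - t < k \<and> E (fst w) (fst u) \<and> nb (fst w) j = fst u \<and> nb (fst u) i = fst w
          \<and> snd w = side_tri k j (k - 1 - t) \<and> snd u = side_tri k i (k - 1 - (k - 1 - t))"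
        using ijt E_sym by auto
      thus ?thesis by blast
    qed
    thus ?thesis using a unfolding gc_adj_def by auto
  qed
qed

lemma gc_in: "gc_adj V E nb k u w \<Longrightarrow> u \<in> gc_verts V k \<and> w \<in> gc_verts V k"
  unfolding gc_adj_def by auto

lemma gc_same: "p \<in> V \<Longrightarrow> a \<in> tri_verts k \<Longrightarrow> b \<in> tri_verts k \<Longrightarrow>
   gc_adj V E nb k (p, a) (p, b) \<longleftrightarrow> cluster_adj k a b"
  unfolding gc_adj_def gc_verts_def using E_irr by auto

lemma gc_deg:
  assumes p: "p \<in> V" and a: "a \<in> tri_verts k"
  shows "graph_degree (gc_verts V k) (gc_adj V E nb k) (p, a) = 3"
proof -
  let ?T = "gc_verts V k" and ?g = "gc_adj V E nb k"
  let ?Nb = "{w \<in> ?T. ?g (p, a) w}"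
  define NI where "NI = {w \<in> ?Nb. fst w = p}"
  define NE where "NE = {w \<in> ?Nb. fst w \<noteq> p}"
  have split: "?Nb = NI \<union> NE" and disj: "NI \<inter> NE = {}" unfolding NI_def NE_def by auto
  have fin: "finite ?Nb" using finT by auto
  have NI_eq: "NI = (\<lambda>b. (p, b)) ` {b \<in> tri_verts k. cluster_adj k a b}"
  proof
    show "NI \<subseteq> (\<lambda>b. (p, b)) ` {b \<in> tri_verts k. cluster_adj k a b}"
    proof
      fix w assume w: "w \<in> NI"
      then obtain b where wb: "w = (p, b)" unfolding NI_def by (cases w, auto)
      have "b \<in> tri_verts k" using w wb unfolding NI_def gc_verts_def by auto
      moreover have "cluster_adj k a b" using w wb gc_same[OF p a] \<open>b \<in> tri_verts k\<close> unfolding NI_def by auto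
      ultimately show "w \<in> (\<lambda>b. (p, b)) ` {b \<in> tri_verts k. cluster_adj k a b}" using wb by auto
    qed
    show "(\<lambda>b. (p, b)) ` {b \<in> tri_verts k. cluster_adj k a b} \<subseteq> NI"
      using gc_same[OF p a] p unfolding NI_def gc_verts_def by auto
  qed
  have cInt: "card NI = cd k a" unfolding NI_eq graph_degree_def
    by (rule card_image, auto intro: inj_onI)
  define tt where "tt = (\<lambda>i. THE t. t < k \<and> a = side_tri k i t)"
  define jj where "jj = (\<lambda>i. THE j. j < 3 \<and> nb (nb p i) j = p)"
  define wf where "wf = (\<lambda>i. (nb p i, side_tri k (jj i) (k - 1 - tt i)))"
  have tt: "tt i < k \<and> a = side_tri k i (tt i)" if "i \<in> sides k a" for i
  proof -
    have "\<exists>!t. t < k \<and> a = side_tri k i t"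
      using that side_tri_inj[of i _ k] unfolding sides_def by auto
    thus ?thesis unfolding tt_def by (rule theI')
  qed
  have jj: "jj i < 3 \<and> nb (nb p i) (jj i) = p" if "i < 3" for i
    unfolding jj_def by (rule theI', rule nb_back[OF p that])
  have sides3: "i < 3" if "i \<in> sides k a" for i using that unfolding sides_def by auto
  have NE_eq: "NE = wf ` sides k a"
  proof
    show "NE \<subseteq> wf ` sides k a"
    proof
      fix w assume w: "w \<in> NE"
      obtain q y where wq: "w = (q, y)" by (cases w)
      have qp: "q \<noteq> p" using w wq unfolding NE_def by auto
      then obtain i j t where ijt: "i < 3" "j < 3" "t < k" "E p q" "nb p i = q"
        "nb q j = p" "a = side_tri k i t" "y = side_tri k j (k - 1 - t)"
        using w wq unfolding NE_def gc_adj_def by auto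
      have iss: "i \<in> sides k a" unfolding sides_def using ijt by auto
      have "t = tt i" using tt[OF iss] ijt side_tri_inj by metis
      moreover have "j = jj i" using jj[OF ijt(1)] nb_back[OF p ijt(1)] ijt by auto
      ultimately have "w = wf i" unfolding wf_def wq using ijt by auto
      thus "w \<in> wf ` sides k a" using iss by auto
    qed
    show "wf ` sides k a \<subseteq> NE"
    proof
      fix w assume "w \<in> wf ` sides k a"
      then obtain i where iss: "i \<in> sides k a" and w: "w = wf i" by auto
      have i: "i < 3" using sides3[OF iss] .
      note N = nb_nb[OF p i] and T = tt[OF iss] and J = jj[OF i]
      have neq: "nb p i \<noteq> p" using N E_irr by auto
      have inT: "wf i \<in> ?T" unfolding wf_def gc_verts_def using N J T side_tri_in' by auto
      have pa: "(p, a) \<in> ?T" unfolding gc_verts_def using p a by auto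
      have "i < 3 \<and> jj i < 3 \<and> tt i < k \<and> E (fst (p, a)) (fst (wf i)) \<and> nb (fst (p, a)) i = fst (wf i)
          \<and> nb (fst (wf i)) (jj i) = fst (p, a) \<and> snd (p, a) = side_tri k i (tt i)
          \<and> snd (wf i) = side_tri k (jj i) (k - 1 - tt i)"
        using N J T i by (simp add: wf_def)
      hence "\<exists>i'<3. \<exists>j<3. \<exists>t<k. E (fst (p, a)) (fst (wf i)) \<and> nb (fst (p, a)) i' = fst (wf i)
          \<and> nb (fst (wf i)) j = fst (p, a) \<and> snd (p, a) = side_tri k i' t \<and> snd (wf i) = side_tri k j (k - 1 - t)"
        by blast
      hence "?g (p, a) (wf i)" unfolding gc_adj_def using inT pa by blast
      thus "w \<in> NE" unfolding NE_def w using inT neq by (auto simp: wf_def)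
    qed
  qed
  have inj: "inj_on wf (sides k a)"
  proof (rule inj_onI)
    fix i i' assume i: "i \<in> sides k a" and i': "i' \<in> sides k a" and e: "wf i = wf i'"
    hence "nb p i = nb p i'" unfolding wf_def by auto
    thus "i = i'" using nb_bij[OF p] sides3[OF i] sides3[OF i'] unfolding bij_betw_def inj_on_def by auto
  qed
  have cExt: "card NE = card (sides k a)" unfolding NE_eq by (rule card_image[OF inj])
  have "graph_degree ?T ?g (p, a) = card NI + card NE"
    unfolding graph_degree_def split by (rule card_Un_disjoint[OF _ _ disj], insert fin split, auto)
  also have "\<dots> = 3" unfolding cInt cExt using cd_plus_sides[OF a] .
  finally show ?thesis .
qed

end

lemma cluster_sym: "cluster_adj k a b \<Longrightarrow> cluster_adj k b a"
  unfolding cluster_adj_def by (cases a; cases b, auto)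

lemma cluster_in: "cluster_adj k a b \<Longrightarrow> a \<in> tri_verts k \<and> b \<in> tri_verts k"
  unfolding cluster_adj_def by auto


lemma card_idx:
  assumes fin: "finite S"
  shows "card {l. l < length (vlist S) \<and> P (vlist S ! l)} = card {a \<in> S. P a}"
proof -
  note v = vlist[OF fin]
  have inj: "inj_on (\<lambda>l. vlist S ! l) {l. l < length (vlist S) \<and> P (vlist S ! l)}"
    using v(1) by (intro inj_onI, simp add: nth_eq_iff_index_eq)
  have "(\<lambda>l. vlist S ! l) ` {l. l < length (vlist S) \<and> P (vlist S ! l)} = {a \<in> S. P a}"
  proof
    show "(\<lambda>l. vlist S ! l) ` {l. l < length (vlist S) \<and> P (vlist S ! l)} \<subseteq> {a \<in> S. P a}"
      using v(2) by force
    show "{a \<in> S. P a} \<subseteq> (\<lambda>l. vlist S ! l) ` {l. l < length (vlist S) \<and> P (vlist S ! l)}"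
    proof
      fix a assume a: "a \<in> {a \<in> S. P a}"
      hence "a \<in> set (vlist S)" using v by auto
      then obtain l where "l < length (vlist S)" "vlist S ! l = a" by (metis in_set_conv_nth)
      thus "a \<in> (\<lambda>l. vlist S ! l) ` {l. l < length (vlist S) \<and> P (vlist S ! l)}" using a by force
    qed
  qed
  thus ?thesis using card_image[OF inj] by simp
qed

lemma len_vS: "length (vlist (tri_verts k)) = k^2"
  using vlist[OF finite_tri_verts] card_tri_verts by simp

lemma choose_ge:
  assumes k: "2 \<le> k" and b: "1 \<le> b" "b \<le> k^2"
  shows "\<exists>J. J \<subseteq> {..<k^2} \<and> b \<le> card J \<and>
    (\<forall>l\<in>J. real (cd k (vlist (tri_verts k) ! l)) \<ge> 3 - delta k b)"
proof -
  let ?vs = "vlist (tri_verts k)"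
  let ?J = "\<lambda>c. {l. l < length ?vs \<and> c \<le> cd k (?vs ! l)}"
  have cJ: "card (?J c) = card {a \<in> tri_verts k. c \<le> cd k a}" for c by (rule card_idx[OF finite_tri_verts])
  have mem: "?vs ! l \<in> tri_verts k" if "l < length ?vs" for l
    using vlist(2)[OF finite_tri_verts] nth_mem that by blast
  have sub: "?J c \<subseteq> {..<k^2}" for c using len_vS by auto
  have k2: "k^2 \<ge> 4" using mult_mono[OF k k] by (simp add: power2_eq_square)
  have kk: "k^2 \<ge> 3 * (k - 1)"
  proof (cases "k \<ge> 3")
    case True
    hence "k * k \<ge> 3 * k" by (simp add: mult_right_mono)
    moreover have "3 * k \<ge> 3 * (k - 1)" by simp
    ultimately show ?thesis unfolding power2_eq_square by linarith
  next
    case False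
    hence "k = 2" using k by auto
    thus ?thesis by simp
  qed
  show ?thesis
  proof (cases "int b \<le> int (k^2) - 3 * int k + 3")
    case True
    hence d: "delta k b = 0" unfolding delta_def by simp
    have "b \<le> k^2 - 3 * (k - 1)" using True kk k by linarith
    hence "b \<le> card (?J 3)" using cJ[of 3] card_eq3[OF k] by linarith
    thus ?thesis using sub d by (intro exI[of _ "?J 3"], auto)
  next
    case F: False
    show ?thesis
    proof (cases "int b \<le> int (k^2) - 3")
      case True
      hence d: "delta k b = 1" using F unfolding delta_def by simp
      have "b \<le> k^2 - 3" using True k2 by linarith
      hence "b \<le> card (?J 2)" using cJ[of 2] card_ge2[OF k] by linarith
      thus ?thesis using sub d by (intro exI[of _ "?J 2"], auto)
    next
      case False
      hence d: "delta k b = 2" using F unfolding delta_def by simp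
      have "?J 1 = {l. l < length ?vs}" using cd_ge1[OF k] mem by auto
      hence "card (?J 1) = k^2" using len_vS by simp
      thus ?thesis using sub d b by (intro exI[of _ "?J 1"], auto)
    qed
  qed
qed

lemma choose_le:
  assumes k: "1 \<le> k" and b: "1 \<le> b" "b \<le> k^2"
  shows "\<exists>J. J \<subseteq> {..<k^2} \<and> k^2 - b + 1 \<le> card J \<and>
    (\<forall>l\<in>J. real (cd k (vlist (tri_verts k) ! l)) \<le> 3 - delta k b)"
proof -
  let ?vs = "vlist (tri_verts k)"
  let ?J = "\<lambda>c. {l. l < length ?vs \<and> cd k (?vs ! l) \<le> c}"
  have cJ: "card (?J c) = card {a \<in> tri_verts k. cd k a \<le> c}" for c by (rule card_idx[OF finite_tri_verts])
  have mem: "?vs ! l \<in> tri_verts k" if "l < length ?vs" for l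
    using vlist(2)[OF finite_tri_verts] nth_mem that by blast
  have sub: "?J c \<subseteq> {..<k^2}" for c using len_vS by auto
  show ?thesis
  proof (cases "int b \<le> int (k^2) - 3 * int k + 3")
    case True
    hence d: "delta k b = 0" unfolding delta_def by simp
    have "?J 3 = {l. l < length ?vs}" using cd_le3 mem by auto
    hence "card (?J 3) = k^2" using len_vS by simp
    thus ?thesis using sub d b by (intro exI[of _ "?J 3"], auto)
  next
    case F: False
    have k2: "2 \<le> k"
    proof (rule ccontr)
      assume "\<not> 2 \<le> k" hence "k = 1" using k by auto
      thus False using F b by simp
    qed
    show ?thesis
    proof (cases "int b \<le> int (k^2) - 3")
      case True
      hence d: "delta k b = 1" using F unfolding delta_def by simp
      have "k^2 - b + 1 \<le> 3 * (k - 1)" using F k2 b by linarith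
      hence "k^2 - b + 1 \<le> card (?J 2)" using cJ[of 2] card_le2[of k] by linarith
      thus ?thesis using sub d by (intro exI[of _ "?J 2"], auto)
    next
      case False
      hence d: "delta k b = 2" using F unfolding delta_def by simp
      have "k^2 - b + 1 \<le> 3" using False b by linarith
      hence "k^2 - b + 1 \<le> card (?J 1)" using cJ[of 1] card_le1[OF k2] by linarith
      thus ?thesis using sub d by (intro exI[of _ "?J 1"], auto)
    qed
  qed
qed


theorem theorem3p2:
  fixes V :: "'v set" and E :: "'v \<Rightarrow> 'v \<Rightarrow> bool" and nb :: "'v \<Rightarrow> nat \<Rightarrow> 'v" and k :: nat
  assumes "simple_graph V E" and "connected_graph V E" and "three_valent V E"
    and "orientation V E nb" and "k \<ge> 1"
  shows "let G = laplacian_mat (gc_verts V k) (gc_adj V E nb k);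
             N = card (gc_verts V k);
             Adj = adjacency_mat (tri_verts k) (cluster_adj k);
             L = laplacian_mat (tri_verts k) (cluster_adj k)
         in (\<forall>j. 1 \<le> j \<and> j \<le> k^2 \<longrightarrow>
               eig G j \<le> 3 - eig Adj (k^2 - j + 1) \<and>
               eig G (N - j + 1) \<ge> 3 - eig Adj j)
          \<and> (\<forall>i t. 1 \<le> i \<and> i \<le> t \<and> t \<le> k^2 \<longrightarrow>
               eig G i \<le> eig L t + delta k (k^2 - t + i))
          \<and> (\<forall>j s. 1 \<le> j \<and> j \<le> s \<and> s \<le> k^2 \<longrightarrow>
               eig G (N - j + 1) \<ge> eig L (k^2 - s + 1) + delta k (1 + s - j))"
proof -
  note sg = assms(1) and ori = assms(4) and k = assms(5)
  let ?T = "gc_verts V k" and ?g = "gc_adj V E nb k" and ?S = "tri_verts k" and ?c = "cluster_adj k"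
  let ?G = "laplacian_mat ?T ?g" and ?A = "adjacency_mat ?S ?c" and ?L = "laplacian_mat ?S ?c"
  let ?vT = "vlist ?T" and ?vS = "vlist ?S"
  define N where "N = card ?T"
  define m where "m = k^2"
  have finT: "finite ?T" by (rule finT[OF sg ori k])
  note vT = vlist[OF finT] and vS = vlist[OF finite_tri_verts[of k]]
  have lT: "length ?vT = N" unfolding N_def using vT by simp
  have lS: "length ?vS = m" unfolding m_def by (rule len_vS)
  have SG: "symm ?G N" using symm_lap[of ?g ?T] gc_sym[OF sg ori k] lT by metis
  have SA: "symm ?A m" using symm_adj[of ?c ?S] cluster_sym lS by metis
  have SL: "symm ?L m" using symm_lap[of ?c ?S] cluster_sym lS by metis
  obtain p where p: "p \<in> V" using assms(2) unfolding connected_graph_def by auto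
  have mN: "m \<le> N"
  proof -
    have "N = card V * card ?S" unfolding N_def gc_verts_def by (simp add: card_cartesian_product)
    moreover have "card V \<ge> 1" using p finV[OF sg ori k] by (metis One_nat_def Suc_leI card_gt_0_iff empty_iff)
    ultimately show ?thesis unfolding m_def card_tri_verts[symmetric] by simp
  qed
  have m1: "1 \<le> m" unfolding m_def using k by simp
  define Emb where "Emb = mat (length ?vT) (length ?vS) (\<lambda>(i,l). if ?vT ! i = (p, ?vS ! l) then 1 else (0::real))"
  have Ec: "Emb \<in> carrier_mat N m" unfolding Emb_def lT lS by simp
  have io: "\<forall>l<length ?vS. (p, ?vS ! l) \<in> set ?vT"
    using vT vS p unfolding gc_verts_def by auto
  have EE: "transpose_mat Emb * Emb = 1\<^sub>m m"
  proof -
    have "transpose_mat Emb * mat (length ?vT) (length ?vT) (\<lambda>(i,j). if ?vT ! i = ?vT ! j then 1 else 0) * Emb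
        = mat (length ?vS) (length ?vS) (\<lambda>(l,l'). if (p, ?vS ! l) = (p, ?vS ! l') then 1 else 0)"
      unfolding Emb_def by (rule emb_mat[OF vT(1) vS(1) io])
    moreover have "mat (length ?vT) (length ?vT) (\<lambda>(i,j). if ?vT ! i = ?vT ! j then 1 else (0::real)) = 1\<^sub>m N"
      using vT(1) lT by (intro eq_matI, auto simp: nth_eq_iff_index_eq)
    moreover have "mat (length ?vS) (length ?vS) (\<lambda>(l,l'). if (p, ?vS ! l) = (p, ?vS ! l') then 1 else (0::real)) = 1\<^sub>m m"
      using vS(1) lS by (intro eq_matI, auto simp: nth_eq_iff_index_eq)
    moreover have "transpose_mat Emb * 1\<^sub>m N = transpose_mat Emb" using Ec by simp
    ultimately show ?thesis by simp
  qed
  have A: "?A \<in> carrier_mat m m" using adj_carrier lS by metis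
  have G: "?G \<in> carrier_mat N N" using lap_carrier lT by metis
  have EGE: "transpose_mat Emb * ?G * Emb = mat m m (\<lambda>(l,l'). (if l = l' then 3 else 0) - ?A $$ (l,l'))"
  proof -
    have "transpose_mat Emb * ?G * Emb = mat (length ?vS) (length ?vS) (\<lambda>(l,l'). lapf ?T ?g (p, ?vS ! l) (p, ?vS ! l'))"
      unfolding laplacian_f[OF finT] Emb_def by (rule emb_mat[OF vT(1) vS(1) io])
    also have "\<dots> = mat m m (\<lambda>(l,l'). (if l = l' then 3 else 0) - ?A $$ (l,l'))"
    proof (rule eq_matI)
      fix l l' assume "l < dim_row (mat m m (\<lambda>(l,l'). (if l = l' then 3 else 0) - ?A $$ (l,l')))"
        "l' < dim_col (mat m m (\<lambda>(l,l'). (if l = l' then 3 else 0) - ?A $$ (l,l')))"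
      hence l: "l < m" and l': "l' < m" by auto
      have a: "?vS ! l \<in> ?S" and a': "?vS ! l' \<in> ?S" using l l' lS vS nth_mem by metis+
      have eq: "(?vS ! l = ?vS ! l') = (l = l')" using vS(1) l l' lS by (simp add: nth_eq_iff_index_eq)
      show "mat (length ?vS) (length ?vS) (\<lambda>(l,l'). lapf ?T ?g (p, ?vS ! l) (p, ?vS ! l')) $$ (l,l')
          = mat m m (\<lambda>(l,l'). (if l = l' then 3 else 0) - ?A $$ (l,l')) $$ (l,l')"
        using l l' lS eq gc_deg[OF sg ori k p a] gc_same[OF sg ori k p a a']
        unfolding lapf_def adjacency_mat_def Let_def by auto
    qed (insert lS, auto)
    finally show ?thesis .
  qed
  have quadG: "(Emb *\<^sub>v y) \<bullet> (?G *\<^sub>v (Emb *\<^sub>v y)) = 3 * (y \<bullet> y) - y \<bullet> (?A *\<^sub>v y)" if y: "y \<in> carrier_vec m" for y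
  proof -
    have Ey: "Emb *\<^sub>v y \<in> carrier_vec N" using Ec y by simp
    have GEy: "?G *\<^sub>v (Emb *\<^sub>v y) \<in> carrier_vec N" using G Ey by simp
    have "(Emb *\<^sub>v y) \<bullet> (?G *\<^sub>v (Emb *\<^sub>v y)) = (?G *\<^sub>v (Emb *\<^sub>v y)) \<bullet> (Emb *\<^sub>v y)"
      by (rule comm_scalar_prod[OF Ey GEy])
    also have "\<dots> = (transpose_mat Emb *\<^sub>v (?G *\<^sub>v (Emb *\<^sub>v y))) \<bullet> y"
      by (rule scalar_transpose[OF Ec GEy y])
    also have "transpose_mat Emb *\<^sub>v (?G *\<^sub>v (Emb *\<^sub>v y)) = (transpose_mat Emb * ?G * Emb) *\<^sub>v y"
    proof -
      have ETG: "transpose_mat Emb * ?G \<in> carrier_mat m N" using Ec G by simp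
      have "(transpose_mat Emb * ?G * Emb) *\<^sub>v y = (transpose_mat Emb * ?G) *\<^sub>v (Emb *\<^sub>v y)"
        by (rule assoc_mult_mat_vec[OF ETG Ec y])
      also have "\<dots> = transpose_mat Emb *\<^sub>v (?G *\<^sub>v (Emb *\<^sub>v y))"
        by (rule assoc_mult_mat_vec[OF _ G Ey], insert Ec, simp)
      finally show ?thesis by simp
    qed
    also have "\<dots> = mat m m (\<lambda>(l,l'). (if l = l' then 3 else 0) - ?A $$ (l,l')) *\<^sub>v y" unfolding EGE ..
    also have "(\<dots>) \<bullet> y = y \<bullet> (\<dots>)" by (rule comm_scalar_prod[of _ m], rule carrier_vecI, simp, rule y)
    also have "\<dots> = (\<Sum>l<m. 3 * (y $ l)^2) - y \<bullet> (?A *\<^sub>v y)"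
      by (rule diag_minus[OF A y])
    also have "(\<Sum>l<m. 3 * (y $ l)^2) = 3 * (y \<bullet> y)" using y
      unfolding power2_eq_square by (auto simp: scalar_prod_def atLeast0LessThan sum_distrib_left mult.assoc)
    finally show ?thesis .
  qed
  have quadA: "y \<bullet> (?A *\<^sub>v y) = (\<Sum>l<m. real (cd k (?vS ! l)) * (y $ l)^2) - y \<bullet> (?L *\<^sub>v y)"
    if y: "y \<in> carrier_vec m" for y
    using quad_lap[of y ?S ?c] y lS by simp
  have claim1: "eig ?G j \<le> 3 - eig ?A (m - j + 1) \<and> eig ?G (N - j + 1) \<ge> 3 - eig ?A j"
    if j: "1 \<le> j" "j \<le> m" for j
    using U1[OF SG SA Ec EE quadG mN j] L1[OF SG SA Ec EE quadG mN j] by simp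
  have claim2: "eig ?G i \<le> eig ?L t + delta k (m - t + i)" if it: "1 \<le> i" "i \<le> t" "t \<le> m" for i t
  proof (cases "k = 1")
    case True
    hence mm: "m = 1" unfolding m_def by simp
    hence it1: "i = 1" "t = 1" using it by auto
    have "eig ?G 1 \<le> 0"
      by (rule lap_min[OF SG], insert mN mm, simp, insert lap_ones[OF finT gc_in[OF sg ori k, THEN conjunct2]] lT, simp)
    moreover have "eig ?L 1 \<ge> 0"
      using lap_max[OF SL m1] lap_ones[OF finite_tri_verts[of k], of ?c] cluster_in lS mm by simp
    moreover have "delta k (m - t + i) = 0" using True it1 mm unfolding delta_def by simp
    ultimately show ?thesis using it1 by simp
  next
    case False
    hence k2: "2 \<le> k" using k by auto
    define b where "b = m - t + i"
    have b: "1 \<le> b" "b \<le> k^2" using it unfolding b_def m_def by auto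
    obtain J where J: "J \<subseteq> {..<m}" "b \<le> card J" "\<forall>l\<in>J. real (cd k (?vS ! l)) \<ge> 3 - delta k b"
      using choose_ge[OF k2 b] unfolding m_def by blast
    have "eig ?A (m - i + 1) \<ge> 3 - eig ?L t - delta k b"
      by (rule U2[OF SA SL quadA it J(1) _ J(3)], insert J(2), unfold b_def)
    moreover have "eig ?G i \<le> 3 - eig ?A (m - i + 1)" using claim1[of i] it by simp
    ultimately show ?thesis unfolding b_def by simp
  qed
  have claim3: "eig ?G (N - j + 1) \<ge> eig ?L (m - s + 1) + delta k (1 + s - j)"
    if js: "1 \<le> j" "j \<le> s" "s \<le> m" for j s
  proof -
    define b where "b = 1 + s - j"
    have b: "1 \<le> b" "b \<le> k^2" using js unfolding b_def m_def by auto
    obtain J where J: "J \<subseteq> {..<m}" "m - b + 1 \<le> card J" "\<forall>l\<in>J. real (cd k (?vS ! l)) \<le> 3 - delta k b"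
      using choose_le[OF k b] unfolding m_def by blast
    have cJ: "m - s + j \<le> card J" using J(2) js unfolding b_def by arith
    have "eig ?A j \<le> 3 - eig ?L (m - s + 1) - delta k b"
      by (rule L2[OF SA SL quadA js J(1) cJ J(3)])
    moreover have "eig ?G (N - j + 1) \<ge> 3 - eig ?A j" using claim1[of j] js by simp
    ultimately show ?thesis unfolding b_def by simp
  qed
  show ?thesis unfolding Let_def N_def[symmetric] m_def[symmetric]
    using claim1 claim2 claim3 by blast
qed


end
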